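(* Let $B=\bigoplus_{i\in\mathbb{Z}}B_i$ be a $\mathbb{Z}$-graded noetherian integral domain with $e(B)=1$, and suppose $B=B_0[x_1,\dots,x_n]$ with $n\ge2$, where each $x_i\neq0$ is homogeneous of degree $d_i\in\mathbb{Z}\setminus\{0\}$. Let $e_i=\gcd(d_1,\dots,\widehat{d_i},\dots,d_n)$ for $1\le i\le n$; let $U=\{i: 1\le i\le n,\ x_i \text{ is a unit of } B\}$ and $U^c=\{1,\dots,n\}\setminus U$; let $E$ be the set of prime factors of $\prod_{i\in U^c}e_i$ ($E=\emptyset$ if $U^c=\emptyset$). Then: (a) $E\subseteq\Pi(B)$; (b) if $U\neq\emptyset$, then every element of $\Pi(B)$ is a prime factor of $\gcd\{d_i: i\in U\}$; (c) if no height-$1$ prime ideal of $B$ contains $\bigcup_{i\in\mathbb{Z}\setminus\{0\}}B_i$, then every element of $\Pi(B)$ is a prime factor of $d_1\cdots d_n$; (d) if for every pair of distinct $i,j\in\{1,\dots,n\}$ no height-$1$ prime ideal of $B$ contains $\{x_i,x_j\}$, then $\Pi(B)=E$.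
   Context: For a $\mathbb{Z}$-graded domain $C$, $e(C)=\gcd\{i\in\mathbb{Z}:C_i\neq0\}$. $\Pi(B)$ is the set of primes $p$ with $p\mid e(B/\mathfrak{p})$ for some homogeneous height-$1$ prime ideal $\mathfrak{p}$ of $B$. *)

theory Defs
  imports Main "HOL-Computational_Algebra.Primes"
begin

definition is_ideal :: "'a::comm_ring_1 set \<Rightarrow> bool" where
  "is_ideal I \<longleftrightarrow> 0 \<in> I \<and> (\<forall>a\<in>I. \<forall>b\<in>I. a + b \<in> I) \<and> (\<forall>r. \<forall>a\<in>I. r * a \<in> I)"

definition is_prime_ideal :: "'a::comm_ring_1 set \<Rightarrow> bool" where
  "is_prime_ideal P \<longleftrightarrow> is_ideal P \<and> P \<noteq> UNIV \<and> (\<forall>a b. a * b \<in> P \<longrightarrow> a \<in> P \<or> b \<in> P)"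

definition noetherian_ring :: "'a::comm_ring_1 itself \<Rightarrow> bool" where
  "noetherian_ring _ \<longleftrightarrow>
     (\<forall>I :: nat \<Rightarrow> 'a set. (\<forall>k. is_ideal (I k)) \<and> (\<forall>k. I k \<subseteq> I (Suc k))
        \<longrightarrow> (\<exists>N. \<forall>k\<ge>N. I k = I N))"

definition height_ge :: "'a::comm_ring_1 set \<Rightarrow> nat \<Rightarrow> bool" where
  "height_ge P k \<longleftrightarrow> (\<exists>Q :: nat \<Rightarrow> 'a set. Q k = P \<and> (\<forall>i\<le>k. is_prime_ideal (Q i))
                                   \<and> (\<forall>i<k. Q i \<subset> Q (Suc i)))"

definition height_one_prime :: "'a::comm_ring_1 set \<Rightarrow> bool" where
  "height_one_prime P \<longleftrightarrow> is_prime_ideal P \<and> height_ge P 1 \<and> \<not> height_ge P 2"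

inductive_set subring_gen :: "'a::comm_ring_1 set \<Rightarrow> 'a set" for S where
  gen: "a \<in> S \<Longrightarrow> a \<in> subring_gen S"
| zero: "0 \<in> subring_gen S"
| one: "1 \<in> subring_gen S"
| add: "a \<in> subring_gen S \<Longrightarrow> b \<in> subring_gen S \<Longrightarrow> a + b \<in> subring_gen S"
| neg: "a \<in> subring_gen S \<Longrightarrow> - a \<in> subring_gen S"
| mult: "a \<in> subring_gen S \<Longrightarrow> b \<in> subring_gen S \<Longrightarrow> a * b \<in> subring_gen S"

definition graded_decomp :: "(int \<Rightarrow> 'a::comm_ring_1 set) \<Rightarrow> 'a \<Rightarrow> (int \<Rightarrow> 'a) \<Rightarrow> bool" where
  "graded_decomp G b f \<longleftrightarrow> (\<forall>i. f i \<in> G i) \<and> finite {i. f i \<noteq> 0} \<and> b = sum f {i. f i \<noteq> 0}"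

text \<open>\<open>B = \<Oplus>_{i\<in>\<int>} G i\<close> as a graded ring (the whole type is the ring B).\<close>
definition graded_ring :: "(int \<Rightarrow> 'a::comm_ring_1 set) \<Rightarrow> bool" where
  "graded_ring G \<longleftrightarrow>
     (\<forall>i. 0 \<in> G i \<and> (\<forall>a\<in>G i. \<forall>b\<in>G i. a + b \<in> G i) \<and> (\<forall>a\<in>G i. - a \<in> G i))
   \<and> (\<forall>i j. \<forall>a\<in>G i. \<forall>b\<in>G j. a * b \<in> G (i + j))
   \<and> (\<forall>b. \<exists>!f. graded_decomp G b f)"

definition homogeneous_ideal :: "(int \<Rightarrow> 'a::comm_ring_1 set) \<Rightarrow> 'a set \<Rightarrow> bool" where
  "homogeneous_ideal G P \<longleftrightarrow> is_ideal P \<and>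
     (\<forall>b\<in>P. \<forall>f. graded_decomp G b f \<longrightarrow> (\<forall>i. f i \<in> P))"

definition e_deg :: "(int \<Rightarrow> 'a::comm_ring_1 set) \<Rightarrow> int" where
  "e_deg G = Gcd {i. G i \<noteq> {0}}"

text \<open>For the quotient \<open>B/P\<close> of a homogeneous ideal, with induced grading
  \<open>(B/P)_i = (G i + P)/P\<close>, which is nonzero iff \<open>G i \<not>\<subseteq> P\<close>.\<close>
definition e_quot :: "(int \<Rightarrow> 'a::comm_ring_1 set) \<Rightarrow> 'a set \<Rightarrow> int" where
  "e_quot G P = Gcd {i. \<not> G i \<subseteq> P}"

definition Pi_set :: "(int \<Rightarrow> 'a::comm_ring_1 set) \<Rightarrow> nat set" where
  "Pi_set G = {p. prime p \<and> (\<exists>P. homogeneous_ideal G P \<and> height_one_prime P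
                                  \<and> int p dvd e_quot G P)}"

definition prime_factors_int :: "int \<Rightarrow> nat set" where
  "prime_factors_int m = {p. prime p \<and> int p dvd m}"

end

theory Submission
  imports Defs
begin


inductive_set idl :: "'a::comm_ring_1 set \<Rightarrow> 'a set" for S where
  idl_zero: "0 \<in> idl S"
| idl_gen: "a \<in> S \<Longrightarrow> r * a \<in> idl S"
| idl_add: "a \<in> idl S \<Longrightarrow> b \<in> idl S \<Longrightarrow> a + b \<in> idl S"

definition isum :: "'a::comm_ring_1 set \<Rightarrow> 'a set \<Rightarrow> 'a set" where
  "isum A B = {a + b | a b. a \<in> A \<and> b \<in> B}"

definition iprod :: "'a::comm_ring_1 set \<Rightarrow> 'a set \<Rightarrow> 'a set" where
  "iprod A B = idl {a * b | a b. a \<in> A \<and> b \<in> B}"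

definition sat :: "'a::comm_ring_1 set \<Rightarrow> 'a set \<Rightarrow> 'a set" where
  "sat P I = {a. \<exists>s. s \<notin> P \<and> s * a \<in> I}"

lemma sat_mem: "s \<notin> P \<Longrightarrow> s * a \<in> I \<Longrightarrow> a \<in> sat P I"
  unfolding sat_def by blast
lemma sat_memD: "a \<in> sat P I \<Longrightarrow> \<exists>s. s \<notin> P \<and> s * a \<in> I"
  unfolding sat_def by blast
lemma ideal_0: "is_ideal I \<Longrightarrow> 0 \<in> I" by (simp add: is_ideal_def)
lemma ideal_add: "is_ideal I \<Longrightarrow> a \<in> I \<Longrightarrow> b \<in> I \<Longrightarrow> a + b \<in> I" by (simp add: is_ideal_def)
lemma ideal_mult: "is_ideal I \<Longrightarrow> a \<in> I \<Longrightarrow> r * a \<in> I" by (simp add: is_ideal_def)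
lemma ideal_mult2: "is_ideal I \<Longrightarrow> a \<in> I \<Longrightarrow> a * r \<in> I"
  by (metis ideal_mult mult.commute)
lemma ideal_neg: "is_ideal I \<Longrightarrow> a \<in> I \<Longrightarrow> - a \<in> I"
  using ideal_mult[of I a "-1"] by simp
lemma ideal_diff: "is_ideal I \<Longrightarrow> a \<in> I \<Longrightarrow> b \<in> I \<Longrightarrow> a - b \<in> I"
  using ideal_add[of I a "-b"] ideal_neg by fastforce
lemma ideal_sum: "is_ideal I \<Longrightarrow> (\<And>s. s \<in> S \<Longrightarrow> f s \<in> I) \<Longrightarrow> sum f S \<in> I"
  by (induction S rule: infinite_finite_induct) (auto simp: ideal_0 ideal_add)
lemma ideal_UNIV: "is_ideal (UNIV :: 'a::comm_ring_1 set)" by (simp add: is_ideal_def)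
lemma ideal_one: "is_ideal I \<Longrightarrow> 1 \<in> I \<Longrightarrow> I = UNIV"
  using ideal_mult[of I 1] by auto
lemma ideal_Int: "is_ideal I \<Longrightarrow> is_ideal J \<Longrightarrow> is_ideal (I \<inter> J)"
  by (simp add: is_ideal_def)
lemma ideal_zero: "is_ideal {0::'a::comm_ring_1}" by (simp add: is_ideal_def)

lemma prime_ideal: "is_prime_ideal P \<Longrightarrow> is_ideal P" by (simp add: is_prime_ideal_def)
lemma prime_one: "is_prime_ideal P \<Longrightarrow> 1 \<notin> P"
  using ideal_one is_prime_ideal_def by blast
lemma prime_mult: "is_prime_ideal P \<Longrightarrow> a * b \<in> P \<Longrightarrow> a \<in> P \<or> b \<in> P"
  by (simp add: is_prime_ideal_def)
lemma prime_mult_notin: "is_prime_ideal P \<Longrightarrow> a \<notin> P \<Longrightarrow> b \<notin> P \<Longrightarrow> a * b \<notin> P"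
  using prime_mult by blast

lemma idl_mult: "y \<in> idl S \<Longrightarrow> r * y \<in> idl S"
proof (induction y rule: idl.induct)
  case idl_zero then show ?case by (simp add: idl.idl_zero)
next
  case (idl_gen a s) then show ?case by (metis idl.idl_gen mult.assoc)
next
  case (idl_add a b) then show ?case by (simp add: distrib_left idl.idl_add)
qed
lemma idl_ideal: "is_ideal (idl S)"
  by (simp add: is_ideal_def idl.idl_zero idl.idl_add idl_mult)
lemma idl_sub: "S \<subseteq> idl S"
  using idl_gen[of _ S 1] by auto
lemma idl_least: "is_ideal I \<Longrightarrow> S \<subseteq> I \<Longrightarrow> idl S \<subseteq> I"
proof
  fix y assume I: "is_ideal I" "S \<subseteq> I" "y \<in> idl S"
  from this(3) show "y \<in> I"
    by (induction y rule: idl.induct) (use I in \<open>auto simp: ideal_0 ideal_add ideal_mult\<close>)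
qed
lemma idl_mono: "S \<subseteq> T \<Longrightarrow> idl S \<subseteq> idl T"
  by (meson idl_ideal idl_least idl_sub order_trans)
lemma idl_empty: "idl {} = ({0} :: 'a::comm_ring_1 set)"
  using idl_least[OF ideal_zero, of "{}"] idl_zero by auto
lemma idl_insert: "idl (insert a S) = {c * a + y | c y. y \<in> idl S}"
proof -
  let ?T = "{c * a + y | c y. y \<in> idl S}"
  have "is_ideal ?T"
    unfolding is_ideal_def
  proof (intro conjI ballI allI)
    show "0 \<in> ?T" by (rule CollectI, rule exI[of _ 0], rule exI[of _ 0], simp add: idl_zero)
  next
    fix u v assume "u \<in> ?T" "v \<in> ?T"
    then obtain c y c' y' where "u = c * a + y" "y \<in> idl S" "v = c' * a + y'" "y' \<in> idl S" by blast
    then show "u + v \<in> ?T"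
      by (intro CollectI exI[of _ "c + c'"] exI[of _ "y + y'"]) (simp add: algebra_simps idl_add)
  next
    fix r u assume "u \<in> ?T"
    then obtain c y where "u = c * a + y" "y \<in> idl S" by blast
    then show "r * u \<in> ?T"
      by (intro CollectI exI[of _ "r * c"] exI[of _ "r * y"]) (simp add: algebra_simps idl_mult)
  qed
  moreover have "insert a S \<subseteq> ?T"
  proof
    fix z assume "z \<in> insert a S"
    then show "z \<in> ?T"
    proof
      assume "z = a" then show ?thesis
        by (intro CollectI exI[of _ 1] exI[of _ 0]) (simp add: idl_zero)
    next
      assume "z \<in> S" then show ?thesis
        using idl_sub by (intro CollectI exI[of _ 0] exI[of _ z]) auto
    qed
  qed
  ultimately have "idl (insert a S) \<subseteq> ?T" by (rule idl_least)
  moreover have "?T \<subseteq> idl (insert a S)"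
  proof
    fix z assume "z \<in> ?T"
    then obtain c y where "z = c * a + y" "y \<in> idl S" by blast
    moreover have "y \<in> idl (insert a S)" using \<open>y \<in> idl S\<close> idl_mono[of S "insert a S"] by blast
    moreover have "c * a \<in> idl (insert a S)" by (simp add: idl_gen)
    ultimately show "z \<in> idl (insert a S)" by (simp add: idl_add)
  qed
  ultimately show ?thesis by blast
qed

lemma idl_single: "idl {x} = {r * x | r. True}"
  unfolding idl_insert[of x "{}"] idl_empty by simp
lemma isumI: "a \<in> A \<Longrightarrow> b \<in> B \<Longrightarrow> a + b \<in> isum A B"
  unfolding isum_def by blast
lemma isumE: "u \<in> isum A B \<Longrightarrow> (\<And>a b. u = a + b \<Longrightarrow> a \<in> A \<Longrightarrow> b \<in> B \<Longrightarrow> thesis) \<Longrightarrow> thesis"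
  unfolding isum_def by blast
lemma isum_ideal:
  assumes A: "is_ideal A" and B: "is_ideal B" shows "is_ideal (isum A B)"
proof -
  have 0: "0 \<in> isum A B" using isumI[OF ideal_0[OF A] ideal_0[OF B]] by simp
  have add: "u + v \<in> isum A B" if h: "u \<in> isum A B" "v \<in> isum A B" for u v
  proof -
    obtain a b a' b' where e: "u = a + b" "v = a' + b'" and m: "a \<in> A" "b \<in> B" "a' \<in> A" "b' \<in> B"
      using h(1) h(2) by (elim isumE) blast
    have "(a + a') + (b + b') \<in> isum A B"
      by (rule isumI) (simp_all add: ideal_add[OF A] ideal_add[OF B] m)
    moreover have "u + v = (a + a') + (b + b')" unfolding e by (simp add: algebra_simps)
    ultimately show ?thesis by simp
  qed
  have mul: "r * u \<in> isum A B" if h: "u \<in> isum A B" for r u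
  proof -
    obtain a b where e: "u = a + b" and m: "a \<in> A" "b \<in> B"
      using h by (elim isumE) blast
    have "r * a + r * b \<in> isum A B"
      by (rule isumI) (simp_all add: ideal_mult[OF A] ideal_mult[OF B] m)
    moreover have "r * u = r * a + r * b" unfolding e by (simp add: algebra_simps)
    ultimately show ?thesis by simp
  qed
  show ?thesis unfolding is_ideal_def using 0 add mul by blast
qed
lemma isum_left: "is_ideal B \<Longrightarrow> A \<subseteq> isum A B"
proof
  fix a assume "is_ideal B" "a \<in> A"
  then have "a + 0 \<in> isum A B" by (intro isumI ideal_0)
  then show "a \<in> isum A B" by simp
qed
lemma isum_right: "is_ideal A \<Longrightarrow> B \<subseteq> isum A B"
proof
  fix b assume "is_ideal A" "b \<in> B"
  then have "0 + b \<in> isum A B" by (intro isumI ideal_0)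
  then show "b \<in> isum A B" by simp
qed
lemma isum_least: "is_ideal I \<Longrightarrow> A \<subseteq> I \<Longrightarrow> B \<subseteq> I \<Longrightarrow> isum A B \<subseteq> I"
proof
  fix u assume h: "is_ideal I" "A \<subseteq> I" "B \<subseteq> I" "u \<in> isum A B"
  from h(4) obtain a b where "u = a + b" "a \<in> A" "b \<in> B" by (elim isumE)
  then show "u \<in> I" using h(1-3) ideal_add[of I a b] by blast
qed
lemma isum_mono: "A \<subseteq> A' \<Longrightarrow> B \<subseteq> B' \<Longrightarrow> isum A B \<subseteq> isum A' B'"
proof
  fix u assume h: "A \<subseteq> A'" "B \<subseteq> B'" "u \<in> isum A B"
  from h(3) obtain a b where "u = a + b" "a \<in> A" "b \<in> B" by (elim isumE)
  then show "u \<in> isum A' B'" using h(1,2) isumI[of a A' b B'] by blast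
qed

lemma iprod_ideal: "is_ideal (iprod A B)" unfolding iprod_def by (rule idl_ideal)
lemma iprod_least:
  assumes I: "is_ideal I" and h: "\<And>a b. a \<in> A \<Longrightarrow> b \<in> B \<Longrightarrow> a * b \<in> I"
  shows "iprod A B \<subseteq> I"
  unfolding iprod_def
proof (rule idl_least[OF I])
  show "{a * b |a b. a \<in> A \<and> b \<in> B} \<subseteq> I" using h by blast
qed
lemma iprod_sub_right: assumes B: "is_ideal B" shows "iprod A B \<subseteq> B"
  by (rule iprod_least[OF B], rule ideal_mult[OF B], assumption)
lemma iprod_gen: "a \<in> A \<Longrightarrow> b \<in> B \<Longrightarrow> a * b \<in> iprod A B"
  unfolding iprod_def by (rule subsetD[OF idl_sub]) blast
lemma iprod_mono: "A \<subseteq> A' \<Longrightarrow> B \<subseteq> B' \<Longrightarrow> iprod A B \<subseteq> iprod A' B'"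
  by (rule iprod_least[OF iprod_ideal]) (blast intro: iprod_gen)

lemma sat_ideal: assumes P: "is_prime_ideal P" and I: "is_ideal I" shows "is_ideal (sat P I)"
proof -
  have 0: "0 \<in> sat P I" using prime_one[OF P] ideal_0[OF I] by (intro sat_mem[of 1]) auto
  have add: "u + v \<in> sat P I" if h: "u \<in> sat P I" "v \<in> sat P I" for u v
  proof -
    obtain s t where st: "s \<notin> P" "s * u \<in> I" "t \<notin> P" "t * v \<in> I"
      using sat_memD[OF h(1)] sat_memD[OF h(2)] by blast
    have e: "(s * t) * (u + v) = t * (s * u) + s * (t * v)" by (simp add: algebra_simps)
    have "t * (s * u) + s * (t * v) \<in> I"
      by (rule ideal_add[OF I]) (simp_all add: ideal_mult[OF I] st)
    moreover have "s * t \<notin> P" using prime_mult_notin[OF P] st by blast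
    ultimately show ?thesis using e by (intro sat_mem[of "s * t"]) simp_all
  qed
  have mul: "r * u \<in> sat P I" if h: "u \<in> sat P I" for r u
  proof -
    obtain s where st: "s \<notin> P" "s * u \<in> I" using sat_memD[OF h] by blast
    have "r * (s * u) \<in> I" by (rule ideal_mult[OF I st(2)])
    then have "s * (r * u) \<in> I" by (simp add: mult.left_commute)
    then show ?thesis using st(1) by (rule sat_mem[rotated])
  qed
  show ?thesis unfolding is_ideal_def using 0 add mul by blast
qed
lemma sat_sub: "is_prime_ideal P \<Longrightarrow> I \<subseteq> sat P I"
  unfolding sat_def using prime_one by force
lemma sat_mono: "I \<subseteq> J \<Longrightarrow> sat P I \<subseteq> sat P J"
  unfolding sat_def by blast
lemma sat_sat: "is_prime_ideal P \<Longrightarrow> sat P (sat P I) = sat P I"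
proof
  assume P: "is_prime_ideal P"
  show "sat P (sat P I) \<subseteq> sat P I"
  proof
    fix a assume "a \<in> sat P (sat P I)"
    then obtain s t where "s \<notin> P" "t \<notin> P" "t * (s * a) \<in> I" unfolding sat_def by blast
    then have "(t * s) * a \<in> I" "t * s \<notin> P" using prime_mult_notin[OF P] by (simp_all add: mult.assoc)
    then show "a \<in> sat P I" by (intro sat_mem[of "t * s"])
  qed
  show "sat P I \<subseteq> sat P (sat P I)" using P sat_sub by blast
qed
lemma sat_anti: "Q \<subseteq> P \<Longrightarrow> sat P I \<subseteq> sat Q I"
  unfolding sat_def by blast
lemma sat_least: "is_prime_ideal P \<Longrightarrow> I \<subseteq> J \<Longrightarrow> sat P J = J \<Longrightarrow> sat P I \<subseteq> J"
  using sat_mono by blast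
lemma sat_zero: assumes "is_prime_ideal P" "0 \<in> P" shows "sat P {0::'a::idom} = {0}"
proof
  show "sat P {0::'a} \<subseteq> {0}"
  proof
    fix a assume "a \<in> sat P {0::'a}"
    then obtain s where "s \<notin> P" "s * a = 0" unfolding sat_def by blast
    then show "a \<in> {0}" using assms(2) by (cases "s = 0") auto
  qed
  have "(0::'a) \<in> sat P {0}" using prime_one[OF assms(1)] by (intro sat_mem[of 1]) auto
  then show "{0} \<subseteq> sat P {0::'a}" by blast
qed
lemma sat_UNIV: "is_prime_ideal P \<Longrightarrow> is_ideal I \<Longrightarrow> sat P I = I \<Longrightarrow> I \<noteq> UNIV \<Longrightarrow> I \<subseteq> P"
proof
  fix a assume P: "is_prime_ideal P" and I: "is_ideal I" "sat P I = I" "I \<noteq> UNIV" and "a \<in> I"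
  show "a \<in> P"
  proof (rule ccontr)
    assume "a \<notin> P"
    then have "1 \<in> sat P I" using \<open>a \<in> I\<close> by (intro sat_mem[of a]) auto
    then show False using I ideal_one by auto
  qed
qed



lemma noeth_wf:
  assumes N: "noetherian_ring TYPE('a::comm_ring_1)"
  shows "wf {(B, A). is_ideal (A::'a set) \<and> is_ideal B \<and> A \<subset> B}"
proof (unfold wf_iff_no_infinite_down_chain, rule notI)
  assume "\<exists>f. \<forall>i. (f (Suc i), f i) \<in> {(B, A). is_ideal (A::'a set) \<and> is_ideal B \<and> A \<subset> B}"
  then obtain f :: "nat \<Rightarrow> 'a set" where f0: "\<forall>i. (f (Suc i), f i) \<in> {(B, A). is_ideal (A::'a set) \<and> is_ideal B \<and> A \<subset> B}" by (elim exE)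
  have f: "\<And>i. is_ideal (f i)" "\<And>i. f i \<subset> f (Suc i)" using f0 by auto
  have H1: "(\<forall>k. is_ideal (f k)) \<and> (\<forall>k. f k \<subseteq> f (Suc k))" using f by auto
  have H2: "(\<forall>k. is_ideal (f k)) \<and> (\<forall>k. f k \<subseteq> f (Suc k)) \<longrightarrow> (\<exists>M. \<forall>k\<ge>M. f k = f M)"
    using spec[OF N[unfolded noetherian_ring_def], of f] by simp
  obtain M where "\<forall>k\<ge>M. f k = f M" using mp[OF H2 H1] by (elim exE)
  then have "f (Suc M) = f M" by (elim allE[where x="Suc M"]) simp
  then show False using f(2)[of M] by simp
qed

lemma noeth_max:
  assumes N: "noetherian_ring TYPE('a::comm_ring_1)"
    and ne: "(I0::'a set) \<in> F" and id: "\<And>I. I \<in> F \<Longrightarrow> is_ideal I"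
  shows "\<exists>M\<in>F. \<forall>I\<in>F. M \<subseteq> I \<longrightarrow> I = M"
proof -
  obtain z where z: "z \<in> F" "\<And>y. (y, z) \<in> {(B, A). is_ideal (A::'a set) \<and> is_ideal B \<and> A \<subset> B} \<Longrightarrow> y \<notin> F"
    using wfE_min[OF noeth_wf[OF N] ne] by blast
  show ?thesis
  proof (intro bexI[OF _ z(1)] ballI impI)
    fix I assume "I \<in> F" "z \<subseteq> I"
    show "I = z"
    proof (rule ccontr)
      assume "I \<noteq> z"
      then have "(I, z) \<in> {(B, A). is_ideal (A::'a set) \<and> is_ideal B \<and> A \<subset> B}"
        using id[OF \<open>I \<in> F\<close>] id[OF z(1)] \<open>z \<subseteq> I\<close> by blast
      then show False using z(2) \<open>I \<in> F\<close> by blast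
    qed
  qed
qed

lemma noeth_fg:
  assumes N: "noetherian_ring TYPE('a::comm_ring_1)" and I: "is_ideal (I::'a set)"
  shows "\<exists>ms. I = idl (set ms)"
proof -
  let ?F = "{idl (set ms) | ms. set ms \<subseteq> I}"
  have h0: "idl (set []) \<in> ?F" by (intro CollectI exI[of _ "[]"]) simp
  have h1: "\<And>J. J \<in> ?F \<Longrightarrow> is_ideal J" by (elim CollectE exE conjE) (simp add: idl_ideal)
  have "\<exists>M\<in>?F. \<forall>J\<in>?F. M \<subseteq> J \<longrightarrow> J = M"
    by (rule noeth_max[OF N h0]) (rule h1)
  then obtain M where M: "M \<in> ?F" "\<forall>J\<in>?F. M \<subseteq> J \<longrightarrow> J = M" by (elim bexE)
  then obtain ms where ms: "M = idl (set ms)" "set ms \<subseteq> I" by blast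
  have "I \<subseteq> M"
  proof
    fix a assume "a \<in> I"
    then have X: "idl (set (a # ms)) \<in> ?F" using ms(2) by (intro CollectI exI[of _ "a # ms"]) simp
    have Y: "M \<subseteq> idl (set (a # ms))" unfolding ms(1) by (rule idl_mono) auto
    have "idl (set (a # ms)) = M" using mp[OF bspec[OF M(2) X] Y] .
    moreover have "a \<in> idl (set (a # ms))" using idl_sub[of "set (a # ms)"] by auto
    ultimately show "a \<in> M" by simp
  qed
  moreover have "M \<subseteq> I" unfolding ms(1) by (rule idl_least[OF I ms(2)])
  ultimately show ?thesis using ms(1) by blast
qed

lemma desc_stab:
  assumes wf: "wf {(X, Y). \<Phi> X \<and> \<Phi> Y \<and> X \<subset> Y}"
    and D: "\<And>k. \<Phi> (D k)" "\<And>k. D (Suc k) \<subseteq> D k"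
  shows "\<exists>N. \<forall>k\<ge>N. D k = D N"
proof -
  obtain z where z: "z \<in> range D" "\<And>y. (y, z) \<in> {(X, Y). \<Phi> X \<and> \<Phi> Y \<and> X \<subset> Y} \<Longrightarrow> y \<notin> range D"
    using wfE_min[OF wf rangeI[of D 0]] by blast
  then obtain N where N: "z = D N" by blast
  have "D k = D N" if "k \<ge> N" for k
  proof (rule ccontr)
    assume ne: "D k \<noteq> D N"
    have "D k \<subseteq> D N" using lift_Suc_antimono_le[of D, OF D(2) that] .
    then have "(D k, z) \<in> {(X, Y). \<Phi> X \<and> \<Phi> Y \<and> X \<subset> Y}" using ne N D(1) by blast
    then show False using z(2) by blast
  qed
  then show ?thesis by blast
qed

lemma exists_prime:
  assumes N: "noetherian_ring TYPE('a::comm_ring_1)" and x: "\<not> (x::'a) dvd 1"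
  shows "\<exists>M. is_prime_ideal M \<and> x \<in> M"
proof -
  let ?F = "{I. is_ideal I \<and> x \<in> I \<and> (1::'a) \<notin> I}"
  have "idl {x} \<in> ?F"
  proof -
    have "x \<in> idl {x}" using idl_sub by blast
    moreover have "1 \<notin> idl {x}"
    proof
      assume "1 \<in> idl {x}"
      then obtain r where "1 = r * x" unfolding idl_single by blast
      then show False using x by (metis dvd_triv_right)
    qed
    ultimately show ?thesis using idl_ideal by blast
  qed
  then obtain M where M: "M \<in> ?F" "\<And>J. J \<in> ?F \<Longrightarrow> M \<subseteq> J \<Longrightarrow> J = M"
    using noeth_max[OF N, of "idl {x}" ?F] by blast
  have MI: "is_ideal M" "x \<in> M" "1 \<notin> M" using M(1) by auto
  have "is_prime_ideal M"
    unfolding is_prime_ideal_def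
  proof (intro conjI allI impI)
    show "is_ideal M" by (rule MI(1))
    show "M \<noteq> UNIV" using MI(3) by blast
    fix a b assume ab: "a * b \<in> M"
    show "a \<in> M \<or> b \<in> M"
    proof (cases "a \<in> M")
      case True then show ?thesis by simp
    next
      case False note a = False
      let ?J = "isum M (idl {a})"
      have J: "is_ideal ?J" by (rule isum_ideal[OF MI(1) idl_ideal])
      have MJ: "M \<subseteq> ?J" by (rule isum_left[OF idl_ideal])
      have aJ: "a \<in> ?J" using isum_right[OF MI(1), of "idl {a}"] idl_sub[of "{a}"] by blast
      have "1 \<in> ?J"
      proof (rule ccontr)
        assume "1 \<notin> ?J"
        then have "?J \<in> ?F" using J MJ MI(2) by blast
        then have "?J = M" using M(2) MJ by blast
        then show False using aJ a by simp
      qed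
      then obtain m y where my: "1 = m + y" "m \<in> M" "y \<in> idl {a}" by (elim isumE)
      then obtain r where r: "y = r * a" unfolding idl_single by blast
      have "b = b * m + r * (a * b)" using my(1) r
        by (metis mult.commute mult.left_commute distrib_left mult.right_neutral)
      moreover have "b * m \<in> M" by (rule ideal_mult[OF MI(1) my(2)])
      moreover have "r * (a * b) \<in> M" by (rule ideal_mult[OF MI(1) ab])
      ultimately have "b \<in> M" using ideal_add[OF MI(1)] by metis
      then show ?thesis by simp
    qed
  qed
  then show ?thesis using MI(2) by blast
qed

lemma Inter_chain_prime:
  assumes C: "C \<noteq> {}" "\<And>Q. Q \<in> C \<Longrightarrow> is_prime_ideal (Q::'a::comm_ring_1 set)"
    and ch: "\<And>A B. A \<in> C \<Longrightarrow> B \<in> C \<Longrightarrow> A \<subseteq> B \<or> B \<subseteq> A"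
  shows "is_prime_ideal (\<Inter>C)"
  unfolding is_prime_ideal_def
proof (intro conjI allI impI)
  have id: "\<And>Q. Q \<in> C \<Longrightarrow> is_ideal Q" using C(2) prime_ideal by blast
  show "is_ideal (\<Inter>C)" unfolding is_ideal_def
    using id ideal_0 ideal_add ideal_mult by (simp add: Inter_iff) blast
  obtain Q0 where "Q0 \<in> C" using C(1) by blast
  then have "1 \<notin> \<Inter>C" using prime_one[OF C(2)[OF \<open>Q0 \<in> C\<close>]] by blast
  then show "\<Inter>C \<noteq> UNIV" by blast
  fix a b assume ab: "a * b \<in> \<Inter>C"
  show "a \<in> \<Inter>C \<or> b \<in> \<Inter>C"
  proof (cases "a \<in> \<Inter>C")
    case True then show ?thesis by simp
  next
    case False
    then obtain Q1 where Q1: "Q1 \<in> C" "a \<notin> Q1" by blast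
    have bQ1: "b \<in> Q1" using prime_mult[OF C(2)[OF Q1(1)]] ab Q1 by blast
    have "b \<in> \<Inter>C"
    proof
      fix Q assume Q: "Q \<in> C"
      show "b \<in> Q"
      proof (cases "Q \<subseteq> Q1")
        case True
        then have "a \<notin> Q" using Q1 by blast
        then show ?thesis using prime_mult[OF C(2)[OF Q]] ab Q by blast
      next
        case False
        then have "Q1 \<subseteq> Q" using ch[OF Q Q1(1)] by blast
        then show ?thesis using bQ1 by blast
      qed
    qed
    then show ?thesis by simp
  qed
qed

lemma exists_min_prime:
  assumes M: "is_prime_ideal (M::'a::comm_ring_1 set)" "x \<in> M"
  shows "\<exists>P. is_prime_ideal P \<and> x \<in> P \<and> P \<subseteq> M \<and>
             (\<forall>Q. is_prime_ideal Q \<and> x \<in> Q \<and> Q \<subseteq> P \<longrightarrow> Q = P)"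
proof -
  define S where "S = {Q. is_prime_ideal Q \<and> x \<in> Q \<and> Q \<subseteq> M}"
  define A where "A = uminus ` S"
  have "\<forall>C\<in>chains A. \<exists>U\<in>A. \<forall>X\<in>C. X \<subseteq> U"
  proof
    fix C assume "C \<in> chains A"
    then have CA: "C \<subseteq> A" and ch: "\<And>X Y. X \<in> C \<Longrightarrow> Y \<in> C \<Longrightarrow> X \<subseteq> Y \<or> Y \<subseteq> X"
      unfolding chains_def chain_subset_def by blast+
    show "\<exists>U\<in>A. \<forall>X\<in>C. X \<subseteq> U"
    proof (cases "C = {}")
      case True
      have "-M \<in> A" unfolding A_def S_def using M by blast
      then show ?thesis using True by blast
    next
      case False
      let ?K = "uminus ` C"
      have KS: "?K \<subseteq> S" using CA unfolding A_def by auto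
      have "is_prime_ideal (\<Inter>?K)"
      proof (rule Inter_chain_prime)
        show "?K \<noteq> {}" using False by blast
        show "\<And>Q. Q \<in> ?K \<Longrightarrow> is_prime_ideal Q" using KS unfolding S_def by blast
        show "\<And>A B. A \<in> ?K \<Longrightarrow> B \<in> ?K \<Longrightarrow> A \<subseteq> B \<or> B \<subseteq> A" using ch by blast
      qed
      moreover have "x \<in> \<Inter>?K" using KS unfolding S_def by blast
      moreover have "\<Inter>?K \<subseteq> M" using KS False unfolding S_def by blast
      ultimately have "\<Inter>?K \<in> S" unfolding S_def by blast
      then have "- \<Inter>?K \<in> A" unfolding A_def by blast
      moreover have "\<forall>X\<in>C. X \<subseteq> - \<Inter>?K" by blast
      ultimately show ?thesis by blast
    qed
  qed
  from Zorn_Lemma2[OF this] obtain U where U: "U \<in> A" "\<And>X. X \<in> A \<Longrightarrow> U \<subseteq> X \<Longrightarrow> X = U" by blast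
  then obtain P where P: "P \<in> S" "U = -P" unfolding A_def by blast
  show ?thesis
  proof (intro exI conjI allI impI)
    show "is_prime_ideal P" "x \<in> P" "P \<subseteq> M" using P(1) unfolding S_def by auto
    fix Q assume Q: "is_prime_ideal Q \<and> x \<in> Q \<and> Q \<subseteq> P"
    then have "Q \<in> S" using P(1) unfolding S_def by blast
    then have "-Q \<in> A" unfolding A_def by blast
    moreover have "U \<subseteq> -Q" using P(2) Q by blast
    ultimately have "-Q = -P" using U(2) P(2) by blast
    then show "Q = P" by simp
  qed
qed



definition satd :: "'a::comm_ring_1 set \<Rightarrow> 'a set \<Rightarrow> bool" where
  "satd P X \<longleftrightarrow> is_ideal X \<and> sat P X = X"

definition colon :: "'a::comm_ring_1 set \<Rightarrow> 'a \<Rightarrow> 'a set" where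
  "colon A b = {r. r * b \<in> A}"

lemma colon_ideal: assumes A: "is_ideal A" shows "is_ideal (colon A b)"
proof -
  have "0 \<in> colon A b" unfolding colon_def using ideal_0[OF A] by simp
  moreover have "u + v \<in> colon A b" if "u \<in> colon A b" "v \<in> colon A b" for u v
    using that ideal_add[OF A, of "u * b" "v * b"] unfolding colon_def by (simp add: distrib_right)
  moreover have "r * u \<in> colon A b" if "u \<in> colon A b" for r u
    using that ideal_mult[OF A, of "u * b" r] unfolding colon_def by (simp add: mult.assoc)
  ultimately show ?thesis unfolding is_ideal_def by blast
qed

lemma satd_sat: "is_prime_ideal P \<Longrightarrow> is_ideal I \<Longrightarrow> satd P (sat P I)"
  unfolding satd_def using sat_ideal sat_sat by blast

lemma satd_Int: assumes P: "is_prime_ideal P" and "satd P X" "satd P Y" shows "satd P (X \<inter> Y)"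
proof -
  have "sat P (X \<inter> Y) \<subseteq> X \<inter> Y"
    using sat_mono[of "X \<inter> Y" X P] sat_mono[of "X \<inter> Y" Y P] assms(2,3) unfolding satd_def by blast
  moreover have "X \<inter> Y \<subseteq> sat P (X \<inter> Y)" by (rule sat_sub[OF P])
  ultimately show ?thesis using ideal_Int assms(2,3) unfolding satd_def by blast
qed

lemma satd_memI: "satd P X \<Longrightarrow> s \<notin> P \<Longrightarrow> s * a \<in> X \<Longrightarrow> a \<in> X"
  unfolding satd_def using sat_mem by blast

lemma satd_ideal: "satd P X \<Longrightarrow> is_ideal X" unfolding satd_def by blast

lemma modular:
  assumes P: "is_prime_ideal P" and D: "satd P D" "satd P D'" "is_ideal T"
    and sub: "D' \<subseteq> D" and i: "D \<inter> T = D' \<inter> T" and s: "sat P (isum D T) = sat P (isum D' T)"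
  shows "D = D'"
proof
  show "D \<subseteq> D'"
  proof
    fix d assume d: "d \<in> D"
    have "d \<in> isum D T" using isum_left[OF D(3)] d by blast
    then have "d \<in> sat P (isum D' T)" using sat_sub[OF P] s by blast
    then obtain u where u: "u \<notin> P" "u * d \<in> isum D' T" using sat_memD by blast
    then obtain d' t where dt: "u * d = d' + t" "d' \<in> D'" "t \<in> T" by (elim isumE)
    have "t = u * d - d'" using dt(1) by simp
    moreover have "u * d \<in> D" using ideal_mult[OF satd_ideal[OF D(1)] d] .
    moreover have "d' \<in> D" using dt(2) sub by blast
    ultimately have "t \<in> D" using ideal_diff[OF satd_ideal[OF D(1)]] by simp
    then have "t \<in> D'" using i dt(3) by blast
    then have "u * d \<in> D'" using dt(1,2) ideal_add[OF satd_ideal[OF D(2)]] by simp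
    then show "d \<in> D'" using satd_memI[OF D(2) u(1)] by blast
  qed
  show "D' \<subseteq> D" by (rule sub)
qed

locale pit_ctx =
  fixes P :: "'a::idom set" and x :: 'a
  assumes noeth: "noetherian_ring TYPE('a)"
    and P: "is_prime_ideal P" and xP: "x \<in> P"
    and minP: "\<And>Q. is_prime_ideal Q \<Longrightarrow> x \<in> Q \<Longrightarrow> Q \<subseteq> P \<Longrightarrow> Q = P"
begin

lemma colon_exists:
  assumes A: "satd P A" "x \<in> A" "A \<noteq> UNIV"
  shows "\<exists>b. b \<notin> A \<and> (\<forall>p\<in>P. p * b \<in> A)"
proof -
  have Aid: "is_ideal A" using A(1) by (rule satd_ideal)
  let ?F = "{colon A b | b. b \<notin> A}"
  have one: "1 \<notin> A" using A(3) ideal_one[OF Aid] by blast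
  have h0: "colon A 1 \<in> ?F" using one by (intro CollectI exI[of _ 1]) simp
  have h1: "\<And>J. J \<in> ?F \<Longrightarrow> is_ideal J" by (elim CollectE exE conjE) (simp add: colon_ideal[OF Aid])
  have "\<exists>M\<in>?F. \<forall>J\<in>?F. M \<subseteq> J \<longrightarrow> J = M"
    by (rule noeth_max[OF noeth h0]) (rule h1)
  then obtain M where M: "M \<in> ?F" "\<forall>J\<in>?F. M \<subseteq> J \<longrightarrow> J = M" by (elim bexE)
  then obtain b where b: "M = colon A b" "b \<notin> A" by blast
  have Mid: "is_ideal M" using b colon_ideal[OF Aid] by simp
  have Mprime: "is_prime_ideal M"
    unfolding is_prime_ideal_def
  proof (intro conjI allI impI)
    show "is_ideal M" by (rule Mid)
    have "1 \<notin> M" using b unfolding colon_def by simp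
    then show "M \<noteq> UNIV" by blast
    fix u v assume uv: "u * v \<in> M"
    show "u \<in> M \<or> v \<in> M"
    proof (cases "u \<in> M")
      case True then show ?thesis by simp
    next
      case False
      then have ub: "u * b \<notin> A" using b(1) unfolding colon_def by simp
      have X: "colon A (u * b) \<in> ?F" using ub by (intro CollectI exI[of _ "u * b"]) simp
      have Y: "M \<subseteq> colon A (u * b)"
      proof
        fix r assume "r \<in> M"
        then have "r * b \<in> A" using b(1) unfolding colon_def by simp
        then have "u * (r * b) \<in> A" by (rule ideal_mult[OF Aid])
        then show "r \<in> colon A (u * b)" unfolding colon_def by (simp add: algebra_simps)
      qed
      have "colon A (u * b) = M" using mp[OF bspec[OF M(2) X] Y] .
      moreover have "v \<in> colon A (u * b)"
        using uv b(1) unfolding colon_def by (simp add: algebra_simps)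
      ultimately show ?thesis by simp
    qed
  qed
  have xM: "x \<in> M" using b(1) ideal_mult2[OF Aid A(2)] unfolding colon_def by simp
  have MP: "M \<subseteq> P"
  proof
    fix c assume "c \<in> M"
    then have cb: "c * b \<in> A" using b(1) unfolding colon_def by simp
    show "c \<in> P"
    proof (rule ccontr)
      assume "c \<notin> P"
      then have "b \<in> A" using satd_memI[OF A(1) _ cb] by blast
      then show False using b(2) by simp
    qed
  qed
  have "M = P" using minP[OF Mprime xM MP] .
  then have "\<forall>p\<in>P. p * b \<in> A" using b(1) unfolding colon_def by blast
  then show ?thesis using b(2) by blast
qed

lemma Icc_insert: "j < m \<Longrightarrow> {j..<m} = insert j {Suc j..<(m::nat)}" by auto

lemma vs_wf:
  assumes A: "satd P A" and T: "satd P T" and AT: "A \<subseteq> T"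
    and PT: "\<And>p t. p \<in> P \<Longrightarrow> t \<in> T \<Longrightarrow> p * t \<in> A"
  shows "wf {(X, Y). (satd P X \<and> A \<subseteq> X \<and> X \<subseteq> T) \<and> (satd P Y \<and> A \<subseteq> Y \<and> Y \<subseteq> T) \<and> X \<subset> Y}"
proof (unfold wf_iff_no_infinite_down_chain, rule notI)
  let ?R = "{(X, Y). (satd P X \<and> A \<subseteq> X \<and> X \<subseteq> T) \<and> (satd P Y \<and> A \<subseteq> Y \<and> Y \<subseteq> T) \<and> X \<subset> Y}"
  assume "\<exists>f. \<forall>i. (f (Suc i), f i) \<in> ?R"
  then obtain f where f0: "\<forall>i. (f (Suc i), f i) \<in> ?R" by (elim exE)
  have fs: "\<And>i. satd P (f i)" and fA: "\<And>i. A \<subseteq> f i" and fT: "\<And>i. f i \<subseteq> T"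
    and fl: "\<And>i. f (Suc i) \<subset> f i" using f0 by auto
  have fdec: "\<And>l k. l \<le> k \<Longrightarrow> f k \<subseteq> f l"
    using lift_Suc_antimono_le[of f] fl by (metis psubset_imp_subset)
  define w where "w i = (SOME w. w \<in> f i \<and> w \<notin> f (Suc i))" for i
  have w: "w i \<in> f i" "w i \<notin> f (Suc i)" for i
  proof -
    have "\<exists>w. w \<in> f i \<and> w \<notin> f (Suc i)" using fl[of i] by blast
    then have "w i \<in> f i \<and> w i \<notin> f (Suc i)" unfolding w_def by (rule someI_ex)
    then show "w i \<in> f i" "w i \<notin> f (Suc i)" by auto
  qed
  have Aid: "is_ideal A" using A by (rule satd_ideal)
  have fid: "\<And>i. is_ideal (f i)" using fs by (rule satd_ideal)
  have satA: "sat P A = A" using A unfolding satd_def by blast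
  define L where "L m j = sat P (isum A (idl (w ` {j..<m})))" for m j
  have claim: "\<forall>z. z \<in> L m j \<longrightarrow> z \<in> f m \<longrightarrow> z \<in> A" if "j \<le> m" for m j
    using that
  proof (induction j rule: inc_induct)
    case base
    have "isum A (idl (w ` {m..<m})) = A"
    proof -
      have "isum A {0} = A"
      proof
        show "isum A {0} \<subseteq> A" by (rule isum_least[OF Aid]) (auto simp: ideal_0[OF Aid])
        show "A \<subseteq> isum A {0}" by (rule isum_left[OF ideal_zero])
      qed
      then show ?thesis by (simp add: idl_empty)
    qed
    then show ?case unfolding L_def using satA by simp
  next
    case (step j)
    show ?case
    proof (intro allI impI)
      fix z assume z: "z \<in> L m j" "z \<in> f m"
      obtain s where s: "s \<notin> P" "s * z \<in> isum A (idl (w ` {j..<m}))"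
        using sat_memD[OF z(1)[unfolded L_def]] by blast
      have e: "w ` {j..<m} = insert (w j) (w ` {Suc j..<m})" using Icc_insert[OF step(2)] by simp
      obtain a y0 where ay: "s * z = a + y0" "a \<in> A" "y0 \<in> idl (w ` {j..<m})"
        using s(2) by (elim isumE)
      obtain c y where cy: "y0 = c * w j + y" "y \<in> idl (w ` {Suc j..<m})"
        using ay(3) unfolding e idl_insert by blast
      have fSj: "is_ideal (f (Suc j))" by (rule fid)
      have c: "c \<in> P"
      proof (rule ccontr)
        assume cP: "c \<notin> P"
        have "s * z \<in> f (Suc j)"
          using ideal_mult[OF fid z(2)] fdec[of "Suc j" m] step(2) by auto
        moreover have "a \<in> f (Suc j)" using ay(2) fA by blast
        moreover have "y \<in> f (Suc j)"
        proof -
          have "w ` {Suc j..<m} \<subseteq> f (Suc j)"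
          proof
            fix v assume "v \<in> w ` {Suc j..<m}"
            then obtain l where l: "v = w l" "Suc j \<le> l" by auto
            then show "v \<in> f (Suc j)" using w(1)[of l] fdec[OF l(2)] by blast
          qed
          then show ?thesis using idl_least[OF fSj] cy(2) by blast
        qed
        ultimately have "s * z - a - y \<in> f (Suc j)" using ideal_diff[OF fSj] by simp
        moreover have "s * z - a - y = c * w j" using ay(1) cy(1) by simp
        ultimately have "c * w j \<in> f (Suc j)" by simp
        then have "w j \<in> f (Suc j)" using satd_memI[OF fs cP] by blast
        then show False using w(2) by blast
      qed
      have cw: "c * w j \<in> A" using PT[OF c] w(1)[of j] fT by blast
      have "s * z = (a + c * w j) + y" using ay(1) cy(1) by (simp add: algebra_simps)
      moreover have "a + c * w j \<in> A" using ideal_add[OF Aid ay(2) cw] .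
      ultimately have "s * z \<in> isum A (idl (w ` {Suc j..<m}))" using isumI cy(2) by metis
      then have "z \<in> L m (Suc j)" unfolding L_def using s(1) by (rule sat_mem[rotated])
      then show "z \<in> A" using step(3) z(2) by blast
    qed
  qed
  define C where "C m = sat P (isum A (idl (w ` {..<m})))" for m
  have Cid: "\<And>m. is_ideal (C m)" unfolding C_def by (rule sat_ideal[OF P isum_ideal[OF Aid idl_ideal]])
  have Cmono: "C m \<subseteq> C (Suc m)" for m
    unfolding C_def by (intro sat_mono isum_mono idl_mono image_mono) auto
  have wC: "w m \<in> C (Suc m)" for m
  proof -
    have "w m \<in> idl (w ` {..<Suc m})" using idl_sub[of "w ` {..<Suc m}"] by auto
    then have "w m \<in> isum A (idl (w ` {..<Suc m}))" using isum_right[OF Aid] by blast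
    then show ?thesis unfolding C_def using sat_sub[OF P] by blast
  qed
  have wnC: "w m \<notin> C m" for m
  proof
    assume "w m \<in> C m"
    then have "w m \<in> L m 0" unfolding C_def L_def by (simp add: lessThan_atLeast0)
    then have "w m \<in> A" using claim[of 0 m] w(1)[of m] by blast
    then show False using fA[of "Suc m"] w(2)[of m] by blast
  qed
  have "(\<forall>k. is_ideal (C k)) \<and> (\<forall>k. C k \<subseteq> C (Suc k))" using Cid Cmono by blast
  moreover have "(\<forall>k. is_ideal (C k)) \<and> (\<forall>k. C k \<subseteq> C (Suc k)) \<longrightarrow> (\<exists>M. \<forall>k\<ge>M. C k = C M)"
    using spec[OF noeth[unfolded noetherian_ring_def], of C] by simp
  ultimately obtain M where "\<forall>k\<ge>M. C k = C M" by (meson mp exE)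
  then have "C (Suc M) = C M" by (elim allE[where x="Suc M"]) simp
  then show False using wC[of M] wnC[of M] by simp
qed

end


lemma mulset_ideal: assumes J: "is_ideal J" shows "is_ideal {j * m | j. j \<in> J}"
proof -
  let ?S = "{j * m | j. j \<in> J}"
  have "0 \<in> ?S" using ideal_0[OF J] by (intro CollectI exI[of _ 0]) simp
  moreover have "u + v \<in> ?S" if h: "u \<in> ?S" "v \<in> ?S" for u v
  proof -
    obtain j j' where "u = j * m" "j \<in> J" "v = j' * m" "j' \<in> J" using h by blast
    then show ?thesis using ideal_add[OF J, of j j']
      by (intro CollectI exI[of _ "j + j'"]) (simp add: distrib_right)
  qed
  moreover have "r * u \<in> ?S" if h: "u \<in> ?S" for r u
  proof -
    obtain j where "u = j * m" "j \<in> J" using h by blast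
    then show ?thesis using ideal_mult[OF J, of j r]
      by (intro CollectI exI[of _ "r * j"]) (simp add: mult.assoc)
  qed
  ultimately show ?thesis unfolding is_ideal_def by blast
qed

lemma isum_assoc_sub: "isum A (isum B C) \<subseteq> isum (isum A B) C"
proof
  fix u assume "u \<in> isum A (isum B C)"
  then obtain a v where "u = a + v" "a \<in> A" "v \<in> isum B C" by (rule isumE)
  moreover obtain b c where "v = b + c" "b \<in> B" "c \<in> C" using calculation(3) by (elim isumE)
  ultimately have e: "u = (a + b) + c" and h: "a + b \<in> isum A B" "c \<in> C"
    using isumI[of a A b B] by (simp_all add: add.assoc)
  show "u \<in> isum (isum A B) C" unfolding e by (rule isumI[OF h])
qed

lemma key_incl: assumes J: "is_ideal J" shows "iprod J (idl (insert m S)) \<subseteq> isum {j * m | j. j \<in> J} (iprod J (idl S))"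
proof (rule iprod_least[OF isum_ideal[OF mulset_ideal[OF J] iprod_ideal]])
    fix j y assume jy: "j \<in> J" "y \<in> idl (insert m S)"
    then obtain c y' where cy: "y = c * m + y'" "y' \<in> idl S" unfolding idl_insert by blast
    have h1: "(j * c) * m \<in> {j * m | j. j \<in> J}" by (intro CollectI exI[of _ "j * c"]) (simp add: ideal_mult2[OF J(1) jy(1)])
    have h2: "j * y' \<in> iprod J (idl S)" by (rule iprod_gen[OF jy(1) cy(2)])
    have e: "j * y = (j * c) * m + j * y'" using cy(1) by (simp add: algebra_simps)
    have "(j * c) * m + j * y' \<in> isum {j * m | j. j \<in> J} (iprod J (idl S))" by (rule isumI[OF h1 h2])
    then show "j * y \<in> isum {j * m | j. j \<in> J} (iprod J (idl S))" by (simp only: e)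
qed

lemma nakayama:
  assumes P: "is_prime_ideal P" and J: "is_ideal J" "J \<subseteq> P"
  shows "is_ideal N \<Longrightarrow> idl (set ms) \<subseteq> sat P (isum N (iprod J (idl (set ms)))) \<Longrightarrow> idl (set ms) \<subseteq> sat P N"
proof (induction ms arbitrary: N)
  case Nil
  have "0 \<in> sat P N" using sat_sub[OF P] ideal_0[OF Nil(1)] by blast
  then show ?case by (simp add: idl_empty)
next
  case (Cons m ms)
  let ?S = "set ms"
  let ?M = "idl (insert m ?S)"
  let ?M' = "idl ?S"
  let ?Jm = "{j * m | j. j \<in> J}"
  let ?N' = "isum N ?Jm"
  have Nid: "is_ideal N" by (rule Cons(2))
  have Jmid: "is_ideal ?Jm" by (rule mulset_ideal[OF J(1)])
  have N'id: "is_ideal ?N'" by (rule isum_ideal[OF Nid Jmid])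
  have key: "iprod J ?M \<subseteq> isum ?Jm (iprod J ?M')" by (rule key_incl[OF J(1)])
  have "isum N (iprod J ?M) \<subseteq> isum N (isum ?Jm (iprod J ?M'))" by (rule isum_mono[OF subset_refl key])
  also have "\<dots> \<subseteq> isum ?N' (iprod J ?M')" by (rule isum_assoc_sub)
  finally have sub1: "isum N (iprod J ?M) \<subseteq> isum ?N' (iprod J ?M')" .
  have MM: "?M' \<subseteq> ?M" by (rule idl_mono) blast
  have hypM: "?M \<subseteq> sat P (isum ?N' (iprod J ?M'))"
    using Cons(3) sat_mono[OF sub1, of P] by simp
  have "?M' \<subseteq> sat P (isum ?N' (iprod J ?M'))" using MM hypM by blast
  then have IH: "?M' \<subseteq> sat P ?N'" using Cons(1)[OF N'id] by simp
  have "isum ?N' (iprod J ?M') \<subseteq> sat P ?N'"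
  proof (rule isum_least[OF sat_ideal[OF P N'id]])
    show "?N' \<subseteq> sat P ?N'" by (rule sat_sub[OF P])
    show "iprod J ?M' \<subseteq> sat P ?N'" using iprod_sub_right[OF idl_ideal, of J ?S] IH by blast
  qed
  then have "sat P (isum ?N' (iprod J ?M')) \<subseteq> sat P (sat P ?N')" by (rule sat_mono)
  then have "sat P (isum ?N' (iprod J ?M')) \<subseteq> sat P ?N'" unfolding sat_sat[OF P] .
  then have MN': "?M \<subseteq> sat P ?N'" using hypM by blast
  have mM: "m \<in> ?M" using idl_sub[of "insert m ?S"] by blast
  have mN: "m \<in> sat P N"
  proof -
    obtain u where u: "u \<notin> P" "u * m \<in> ?N'" using sat_memD MN' mM by blast
    then obtain n jm where nj: "u * m = n + jm" "n \<in> N" "jm \<in> ?Jm" by (elim isumE)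
    then obtain j where j: "jm = j * m" "j \<in> J" by blast
    have "(u - j) * m = n" using nj(1) j(1) by (simp add: algebra_simps)
    moreover have "u - j \<notin> P"
    proof
      assume "u - j \<in> P"
      then have "(u - j) + j \<in> P" using ideal_add[OF prime_ideal[OF P]] j(2) J(2) by blast
      then show False using u(1) by simp
    qed
    ultimately show ?thesis using nj(2) by (intro sat_mem[of "u - j"]) simp_all
  qed
  have N'N: "?N' \<subseteq> sat P N"
  proof (rule isum_least[OF sat_ideal[OF P Nid]])
    show "N \<subseteq> sat P N" by (rule sat_sub[OF P])
    show "?Jm \<subseteq> sat P N" using ideal_mult[OF sat_ideal[OF P Nid] mN] by blast
  qed
  have "?M' \<subseteq> sat P N" using IH sat_mono[OF N'N, of P] sat_sat[OF P] by blast
  moreover have "idl (insert m ?S) \<subseteq> sat P N"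
  proof (rule idl_least[OF sat_ideal[OF P Nid]])
    show "insert m ?S \<subseteq> sat P N" using mN calculation idl_sub[of ?S] by blast
  qed
  then show ?case by simp
qed

fun ipow :: "'a::comm_ring_1 set \<Rightarrow> nat \<Rightarrow> 'a set" where
  "ipow Q 0 = UNIV"
| "ipow Q (Suc n) = iprod Q (ipow Q n)"

lemma ipow_ideal: "is_ideal (ipow Q n)"
  by (cases n) (simp_all add: ideal_UNIV iprod_ideal)

lemma ipow_Suc_sub: "ipow Q (Suc n) \<subseteq> ipow Q n"
  using iprod_sub_right[OF ipow_ideal] by simp

lemma ipow_power: "a \<in> Q \<Longrightarrow> a ^ n \<in> ipow Q n"
  by (induction n) (simp_all add: iprod_gen)

context pit_ctx
begin

lemma dcc:
  "satd P A \<longrightarrow> x \<in> A \<longrightarrow> wf {(X, Y). (satd P X \<and> A \<subseteq> X) \<and> (satd P Y \<and> A \<subseteq> Y) \<and> X \<subset> Y}"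
proof (induction A rule: wf_induct_rule[OF noeth_wf[OF noeth]])
  case (1 A)
  show ?case
  proof (intro impI)
    assume A: "satd P A" "x \<in> A"
    have Aid: "is_ideal A" using A(1) by (rule satd_ideal)
    let ?R = "{(X, Y). (satd P X \<and> A \<subseteq> X) \<and> (satd P Y \<and> A \<subseteq> Y) \<and> X \<subset> Y}"
    show "wf ?R"
    proof (unfold wf_iff_no_infinite_down_chain, rule notI)
      assume "\<exists>f. \<forall>i. (f (Suc i), f i) \<in> ?R"
      then obtain f where f0: "\<forall>i. (f (Suc i), f i) \<in> ?R" by (elim exE)
      have fs: "\<And>i. satd P (f i)" and fA: "\<And>i. A \<subseteq> f i"
        and fl: "\<And>i. f (Suc i) \<subset> f i" using f0 by auto
      have fid: "\<And>i. is_ideal (f i)" using fs by (rule satd_ideal)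
      show False
      proof (cases "A = UNIV")
        case True
        then show False using fA[of 0] fA[of 1] fl[of 0] by auto
      next
        case False
        obtain b where b: "b \<notin> A" "\<forall>p\<in>P. p * b \<in> A" using colon_exists[OF A False] by blast
        define T where "T = sat P (isum A (idl {b}))"
        have Tid: "is_ideal T" unfolding T_def by (rule sat_ideal[OF P isum_ideal[OF Aid idl_ideal]])
        have Ts: "satd P T" unfolding T_def by (rule satd_sat[OF P isum_ideal[OF Aid idl_ideal]])
        have AT: "A \<subseteq> T" unfolding T_def using isum_left[OF idl_ideal, of A "{b}"] sat_sub[OF P] by blast
        have bT: "b \<in> T" unfolding T_def
          using isum_right[OF Aid, of "idl {b}"] idl_sub[of "{b}"] sat_sub[OF P] by blast
        have AT': "A \<subset> T" using AT bT b(1) by blast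
        have xT: "x \<in> T" using AT A(2) by blast
        have PT: "p * t \<in> A" if pt: "p \<in> P" "t \<in> T" for p t
        proof -
          obtain s where s: "s \<notin> P" "s * t \<in> isum A (idl {b})" using sat_memD pt(2) unfolding T_def by blast
          then obtain a y where ay: "s * t = a + y" "a \<in> A" "y \<in> idl {b}" by (elim isumE)
          then obtain r where r: "y = r * b" unfolding idl_single by blast
          have "s * (p * t) = p * a + r * (p * b)" using ay(1) r by (simp add: algebra_simps)
          moreover have "p * a \<in> A" by (rule ideal_mult[OF Aid ay(2)])
          moreover have "r * (p * b) \<in> A" using ideal_mult[OF Aid] b(2) pt(1) by blast
          ultimately have "s * (p * t) \<in> A" using ideal_add[OF Aid] by simp
          then show ?thesis using satd_memI[OF A(1) s(1)] by blast
        qed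
        have "(T, A) \<in> {(B, A). is_ideal A \<and> is_ideal B \<and> A \<subset> B}" using Aid Tid AT' by blast
        then have wfT: "wf {(X, Y). (satd P X \<and> T \<subseteq> X) \<and> (satd P Y \<and> T \<subseteq> Y) \<and> X \<subset> Y}"
          using 1 Ts xT by blast
        define E where "E i = sat P (isum (f i) T)" for i
        have "\<exists>N. \<forall>k\<ge>N. E k = E N"
        proof (rule desc_stab[where \<Phi> = "\<lambda>X. satd P X \<and> T \<subseteq> X"])
          show "wf {(X, Y). (satd P X \<and> T \<subseteq> X) \<and> (satd P Y \<and> T \<subseteq> Y) \<and> X \<subset> Y}" by (rule wfT)
          fix k
          show "satd P (E k) \<and> T \<subseteq> E k"
            unfolding E_def using satd_sat[OF P isum_ideal[OF fid Tid]] isum_right[OF fid, of T k] sat_sub[OF P]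
            by blast
          show "E (Suc k) \<subseteq> E k" unfolding E_def
            by (rule sat_mono[OF isum_mono[OF psubset_imp_subset[OF fl] subset_refl]])
        qed
        then obtain N1 where N1: "\<forall>k\<ge>N1. E k = E N1" by (elim exE)
        define F where "F i = f i \<inter> T" for i
        have "\<exists>N. \<forall>k\<ge>N. F k = F N"
        proof (rule desc_stab[where \<Phi> = "\<lambda>X. satd P X \<and> A \<subseteq> X \<and> X \<subseteq> T"])
          show "wf {(X, Y). (satd P X \<and> A \<subseteq> X \<and> X \<subseteq> T) \<and> (satd P Y \<and> A \<subseteq> Y \<and> Y \<subseteq> T) \<and> X \<subset> Y}"
            by (rule vs_wf[OF A(1) Ts AT PT])
          fix k
          show "satd P (F k) \<and> A \<subseteq> F k \<and> F k \<subseteq> T"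
            unfolding F_def using satd_Int[OF P fs Ts] fA AT by blast
          show "F (Suc k) \<subseteq> F k" unfolding F_def using fl[of k] by blast
        qed
        then obtain N2 where N2: "\<forall>k\<ge>N2. F k = F N2" by (elim exE)
        define N where "N = max N1 N2"
        have "E (Suc N) = E N"
        proof -
          have "E (Suc N) = E N1" using N1 unfolding N_def by (elim allE[where x="Suc (max N1 N2)"]) simp
          moreover have "E N = E N1" using N1 unfolding N_def by (elim allE[where x="max N1 N2"]) simp
          ultimately show ?thesis by simp
        qed
        moreover have "F (Suc N) = F N"
        proof -
          have "F (Suc N) = F N2" using N2 unfolding N_def by (elim allE[where x="Suc (max N1 N2)"]) simp
          moreover have "F N = F N2" using N2 unfolding N_def by (elim allE[where x="max N1 N2"]) simp
          ultimately show ?thesis by simp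
        qed
        ultimately have "f N = f (Suc N)"
          using modular[OF P fs fs Tid psubset_imp_subset[OF fl]] unfolding E_def F_def by simp
        then show False using fl[of N] by simp
      qed
    qed
  qed
qed

lemma pit:
  assumes Q: "is_prime_ideal Q" and QP: "Q \<subset> P"
  shows "Q = {0}"
proof -
  have Qid: "is_ideal Q" using Q by (rule prime_ideal)
  have xQ: "x \<notin> Q"
  proof
    assume "x \<in> Q"
    then have "Q = P" using minP[OF Q] QP by blast
    then show False using QP by simp
  qed
  define symb where "symb n = sat Q (ipow Q n)" for n
  have symb_id: "\<And>n. is_ideal (symb n)" unfolding symb_def by (rule sat_ideal[OF Q ipow_ideal])
  have symb_dec: "\<And>n. symb (Suc n) \<subseteq> symb n" unfolding symb_def by (rule sat_mono[OF ipow_Suc_sub])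
  define D where "D n = sat P (isum (symb n) (idl {x}))" for n
  define A0 where "A0 = sat P (idl {x})"
  have A0s: "satd P A0" unfolding A0_def by (rule satd_sat[OF P idl_ideal])
  have xA0: "x \<in> A0" unfolding A0_def using idl_sub[of "{x}"] sat_sub[OF P] by blast
  have "\<exists>N. \<forall>k\<ge>N. D k = D N"
  proof (rule desc_stab[where \<Phi> = "\<lambda>X. satd P X \<and> A0 \<subseteq> X"])
    show "wf {(X, Y). (satd P X \<and> A0 \<subseteq> X) \<and> (satd P Y \<and> A0 \<subseteq> Y) \<and> X \<subset> Y}"
      using dcc A0s xA0 by blast
    fix k
    show "satd P (D k) \<and> A0 \<subseteq> D k"
      unfolding D_def A0_def
      using satd_sat[OF P isum_ideal[OF symb_id idl_ideal]] sat_mono[OF isum_right[OF symb_id, of "idl {x}" k], of P]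
      by blast
    show "D (Suc k) \<subseteq> D k" unfolding D_def
      by (rule sat_mono[OF isum_mono[OF symb_dec subset_refl]])
  qed
  then obtain N where N: "\<forall>k\<ge>N. D k = D N" by (elim exE)
  have DN: "D (Suc N) = D N" using N by (elim allE[where x="Suc N"]) simp
  have step2: "symb N \<subseteq> sat P (isum (symb (Suc N)) (iprod (idl {x}) (symb N)))"
  proof
    fix a assume a: "a \<in> symb N"
    have "a \<in> D N" unfolding D_def using a isum_left[OF idl_ideal, of "symb N" "{x}"] sat_sub[OF P] by blast
    then have "a \<in> D (Suc N)" using DN by simp
    then obtain s where s: "s \<notin> P" "s * a \<in> isum (symb (Suc N)) (idl {x})"
      unfolding D_def using sat_memD by blast
    then obtain b y where by0: "s * a = b + y" "b \<in> symb (Suc N)" "y \<in> idl {x}" by (elim isumE)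
    then obtain r where r: "y = r * x" unfolding idl_single by blast
    have "r * x = s * a - b" using by0(1) r by simp
    moreover have "s * a \<in> symb N" by (rule ideal_mult[OF symb_id a])
    moreover have "b \<in> symb N" using by0(2) symb_dec by blast
    ultimately have "r * x \<in> symb N" using ideal_diff[OF symb_id] by simp
    then obtain t where t: "t \<notin> Q" "t * (r * x) \<in> ipow Q N" unfolding symb_def using sat_memD by blast
    have "(t * x) * r \<in> ipow Q N" using t(2) by (simp add: algebra_simps)
    moreover have "t * x \<notin> Q" using prime_mult_notin[OF Q t(1) xQ] .
    ultimately have rS: "r \<in> symb N" unfolding symb_def by (intro sat_mem[of "t * x"]) simp_all
    have "x * r \<in> iprod (idl {x}) (symb N)" using iprod_gen[OF _ rS] idl_sub[of "{x}"] by blast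
    then have "b + r * x \<in> isum (symb (Suc N)) (iprod (idl {x}) (symb N))"
      using isumI[OF by0(2)] by (simp add: mult.commute)
    then have "s * a \<in> isum (symb (Suc N)) (iprod (idl {x}) (symb N))"
      using by0(1) r by simp
    then show "a \<in> sat P (isum (symb (Suc N)) (iprod (idl {x}) (symb N)))" using s(1) by (rule sat_mem[rotated])
  qed
  obtain ms where ms: "symb N = idl (set ms)" using noeth_fg[OF noeth symb_id] by blast
  have JP: "idl {x} \<subseteq> P" using idl_least[OF prime_ideal[OF P]] xP by blast
  have "symb N \<subseteq> sat P (symb (Suc N))"
    using nakayama[OF P idl_ideal JP symb_id, of ms] step2 ms by simp
  also have "\<dots> \<subseteq> sat Q (symb (Suc N))" using sat_anti QP by blast
  also have "\<dots> = symb (Suc N)" unfolding symb_def by (rule sat_sat[OF Q])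
  finally have S1: "symb N \<subseteq> symb (Suc N)" .
  have "ipow Q N \<subseteq> symb N" unfolding symb_def by (rule sat_sub[OF Q])
  also have "\<dots> \<subseteq> symb (Suc N)" by (rule S1)
  also have "\<dots> = sat Q (iprod Q (ipow Q N))" unfolding symb_def by simp
  also have "\<dots> \<subseteq> sat Q (isum {0} (iprod Q (ipow Q N)))"
    by (rule sat_mono[OF isum_right[OF ideal_zero]])
  finally have S2: "ipow Q N \<subseteq> sat Q (isum {0} (iprod Q (ipow Q N)))" .
  obtain ms' where ms': "ipow Q N = idl (set ms')" using noeth_fg[OF noeth ipow_ideal] by blast
  have "ipow Q N \<subseteq> sat Q {0}"
    using nakayama[OF Q Qid subset_refl ideal_zero, of ms'] S2 ms' by simp
  then have Z: "ipow Q N \<subseteq> {0}" using sat_zero[OF Q ideal_0[OF Qid]] by simp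
  show "Q = {0}"
  proof
    show "Q \<subseteq> {0}"
    proof
      fix a assume "a \<in> Q"
      then have "a ^ N \<in> {0}" using ipow_power Z by blast
      then show "a \<in> {0}" by simp
    qed
    show "{0} \<subseteq> Q" using ideal_0[OF Qid] by simp
  qed
qed

end


definition hcomp :: "(int \<Rightarrow> 'a::comm_ring_1 set) \<Rightarrow> 'a \<Rightarrow> int \<Rightarrow> 'a" where
  "hcomp G b = (THE f. graded_decomp G b f)"

definition supp :: "(int \<Rightarrow> 'a::comm_ring_1 set) \<Rightarrow> 'a \<Rightarrow> int set" where
  "supp G b = {k. hcomp G b k \<noteq> 0}"

locale graded =
  fixes G :: "int \<Rightarrow> 'a::idom set"
  assumes grad: "graded_ring G"
begin

lemma G0: "0 \<in> G i" using grad unfolding graded_ring_def by blast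
lemma Gadd: "a \<in> G i \<Longrightarrow> b \<in> G i \<Longrightarrow> a + b \<in> G i" using grad unfolding graded_ring_def by blast
lemma Gneg: "a \<in> G i \<Longrightarrow> - a \<in> G i" using grad unfolding graded_ring_def by blast
lemma Gmult: "a \<in> G i \<Longrightarrow> b \<in> G j \<Longrightarrow> a * b \<in> G (i + j)" using grad unfolding graded_ring_def by blast
lemma Gsum: "(\<And>s. s \<in> S \<Longrightarrow> f s \<in> G i) \<Longrightarrow> sum f S \<in> G i"
  by (induction S rule: infinite_finite_induct) (auto simp: G0 Gadd)
lemma ex1: "\<exists>!f. graded_decomp G b f" using grad unfolding graded_ring_def by blast

lemma hc_decomp: "graded_decomp G b (hcomp G b)"
  unfolding hcomp_def using theI'[OF ex1] .
lemma hc_unique: "graded_decomp G b f \<Longrightarrow> hcomp G b = f"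
  unfolding hcomp_def using the1_equality[OF ex1] by blast
lemma hc_in: "hcomp G b k \<in> G k" using hc_decomp unfolding graded_decomp_def by blast
lemma supp_fin: "finite (supp G b)" using hc_decomp unfolding graded_decomp_def supp_def by blast
lemma hc_sum_supp: "b = sum (hcomp G b) (supp G b)"
  using hc_decomp unfolding graded_decomp_def supp_def by blast
lemma hc_sum: "finite S \<Longrightarrow> supp G b \<subseteq> S \<Longrightarrow> b = sum (hcomp G b) S"
proof -
  assume S: "finite S" "supp G b \<subseteq> S"
  have "sum (hcomp G b) S = sum (hcomp G b) (supp G b)"
    by (rule sum.mono_neutral_right[OF S(1) S(2)]) (auto simp: supp_def)
  then show ?thesis using hc_sum_supp by simp
qed

lemma decompI:
  assumes "\<And>i. f i \<in> G i" "finite S" "{k. f k \<noteq> 0} \<subseteq> S" "b = sum f S"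
  shows "hcomp G b = f"
proof (rule hc_unique)
  have fin: "finite {k. f k \<noteq> 0}" using assms(2,3) finite_subset by blast
  have "sum f S = sum f {k. f k \<noteq> 0}"
    by (rule sum.mono_neutral_right[OF assms(2) assms(3)]) auto
  then show "graded_decomp G b f" unfolding graded_decomp_def using assms(1,4) fin by simp
qed

lemma hc_add: "hcomp G (a + b) k = hcomp G a k + hcomp G b k"
proof -
  have "hcomp G (a + b) = (\<lambda>k. hcomp G a k + hcomp G b k)"
  proof (rule decompI)
    show "\<And>i. hcomp G a i + hcomp G b i \<in> G i" by (simp add: Gadd hc_in)
    show "finite (supp G a \<union> supp G b)" by (simp add: supp_fin)
    show "{k. hcomp G a k + hcomp G b k \<noteq> 0} \<subseteq> supp G a \<union> supp G b" unfolding supp_def by auto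
    have "a = sum (hcomp G a) (supp G a \<union> supp G b)" by (rule hc_sum) (auto simp: supp_fin)
    moreover have "b = sum (hcomp G b) (supp G a \<union> supp G b)" by (rule hc_sum) (auto simp: supp_fin)
    ultimately show "a + b = (\<Sum>k\<in>supp G a \<union> supp G b. hcomp G a k + hcomp G b k)"
      by (simp add: sum.distrib)
  qed
  then show ?thesis by simp
qed

lemma hc_hom: assumes "a \<in> G d" shows "hcomp G a k = (if k = d then a else 0)"
proof -
  have "hcomp G a = (\<lambda>k. if k = d then a else 0)"
    by (rule decompI[where S="{d}"]) (auto simp: assms G0)
  then show ?thesis by simp
qed

lemma hc_zero: "hcomp G 0 k = 0" using hc_hom[OF G0[of 0]] by simp

lemma hc_neg: "hcomp G (- a) k = - hcomp G a k"
  using hc_add[of a "- a" k] hc_zero[of k] by (simp add: eq_neg_iff_add_eq_0 add.commute)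

lemma hc_diff: "hcomp G (a - b) k = hcomp G a k - hcomp G b k"
  using hc_add[of a "- b" k] hc_neg[of b k] by simp

lemma hc_setsum: "finite S \<Longrightarrow> hcomp G (sum g S) k = (\<Sum>s\<in>S. hcomp G (g s) k)"
  by (induction S rule: finite_induct) (simp_all add: hc_zero hc_add)

lemma hc_hom_sum:
  assumes "finite S" "\<And>s. s \<in> S \<Longrightarrow> g s \<in> G (dg s)"
  shows "hcomp G (sum g S) k = (\<Sum>s\<in>S. if dg s = k then g s else 0)"
proof -
  have "hcomp G (sum g S) k = (\<Sum>s\<in>S. hcomp G (g s) k)" by (rule hc_setsum[OF assms(1)])
  also have "\<dots> = (\<Sum>s\<in>S. if dg s = k then g s else 0)"
  proof (rule sum.cong[OF refl])
    fix s assume "s \<in> S"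
    show "hcomp G (g s) k = (if dg s = k then g s else 0)" using hc_hom[OF assms(2)[OF \<open>s \<in> S\<close>], of k] by auto
  qed
  finally show ?thesis .
qed

lemma hc_mult_gen:
  assumes A: "finite A" "supp G a \<subseteq> A" and B: "finite B" "supp G b \<subseteq> B"
  shows "hcomp G (a * b) k = (\<Sum>i\<in>A. \<Sum>j\<in>B. if i + j = k then hcomp G a i * hcomp G b j else 0)"
proof -
  have "a * b = sum (hcomp G a) A * sum (hcomp G b) B" using hc_sum[OF A] hc_sum[OF B] by simp
  also have "\<dots> = (\<Sum>i\<in>A. \<Sum>j\<in>B. hcomp G a i * hcomp G b j)" by (rule sum_product)
  finally have e: "a * b = (\<Sum>i\<in>A. \<Sum>j\<in>B. hcomp G a i * hcomp G b j)" .
  have "hcomp G (a * b) k = (\<Sum>i\<in>A. hcomp G (\<Sum>j\<in>B. hcomp G a i * hcomp G b j) k)"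
    unfolding e by (rule hc_setsum[OF A(1)])
  also have "\<dots> = (\<Sum>i\<in>A. \<Sum>j\<in>B. if i + j = k then hcomp G a i * hcomp G b j else 0)"
  proof (rule sum.cong[OF refl])
    fix i assume "i \<in> A"
    show "hcomp G (\<Sum>j\<in>B. hcomp G a i * hcomp G b j) k = (\<Sum>j\<in>B. if i + j = k then hcomp G a i * hcomp G b j else 0)"
      by (rule hc_hom_sum[OF B(1), where dg="\<lambda>j. i + j"]) (simp add: Gmult hc_in)
  qed
  finally show ?thesis .
qed

lemma hc_mult:
  "hcomp G (a * b) k = (\<Sum>i\<in>supp G a. \<Sum>j\<in>supp G b. if i + j = k then hcomp G a i * hcomp G b j else 0)"
  by (rule hc_mult_gen) (simp_all add: supp_fin)

lemma one_G0:
  assumes z: "z \<in> G d" "z \<noteq> 0"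
  shows "1 \<in> G 0"
proof -
  have zs: "supp G z \<subseteq> {d}" unfolding supp_def using hc_hom[OF z(1)] by auto
  have c1: "hcomp G 1 i = 0" if "i \<noteq> 0" for i
  proof -
    have "hcomp G (z * 1) (d + i) = (\<Sum>i'\<in>{d}. \<Sum>j\<in>supp G 1. if i' + j = d + i then hcomp G z i' * hcomp G 1 j else 0)"
      by (rule hc_mult_gen) (simp_all add: zs supp_fin)
    also have "\<dots> = (\<Sum>j\<in>supp G 1. if i = j then z * hcomp G 1 j else 0)"
      using hc_hom[OF z(1)] by (auto intro!: sum.cong)
    also have "\<dots> = (if i \<in> supp G 1 then z * hcomp G 1 i else 0)" by (simp add: supp_fin)
    also have "\<dots> = z * hcomp G 1 i" unfolding supp_def by auto
    finally have "hcomp G z (d + i) = z * hcomp G 1 i" by simp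
    moreover have "hcomp G z (d + i) = 0" using hc_hom[OF z(1)] that by simp
    ultimately show ?thesis using z(2) by simp
  qed
  have "supp G 1 \<subseteq> {0}" unfolding supp_def using c1 by auto
  then have "1 = sum (hcomp G 1) {0}" by (intro hc_sum) simp_all
  then have "1 = hcomp G 1 0" by simp
  then show ?thesis using hc_in[of 1 0] by simp
qed

end


definition hp :: "(int \<Rightarrow> 'a::comm_ring_1 set) \<Rightarrow> 'a set \<Rightarrow> 'a set" where
  "hp G Q = {b. \<forall>k. hcomp G b k \<in> Q}"

context graded
begin

lemma hp_mem: "b \<in> hp G Q \<longleftrightarrow> (\<forall>k. hcomp G b k \<in> Q)" unfolding hp_def by simp

lemma hp_ideal: assumes Q: "is_ideal Q" shows "is_ideal (hp G Q)"
proof -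
  have "0 \<in> hp G Q" unfolding hp_mem hc_zero using ideal_0[OF Q] by simp
  moreover have "u + v \<in> hp G Q" if "u \<in> hp G Q" "v \<in> hp G Q" for u v
    using that unfolding hp_mem hc_add using ideal_add[OF Q] by blast
  moreover have "r * u \<in> hp G Q" if h: "u \<in> hp G Q" for r u
    unfolding hp_mem
  proof
    fix k
    show "hcomp G (r * u) k \<in> Q" unfolding hc_mult
      by (intro ideal_sum[OF Q]) (use h in \<open>auto simp: hp_mem ideal_0[OF Q] ideal_mult[OF Q]\<close>)
  qed
  ultimately show ?thesis unfolding is_ideal_def by blast
qed

lemma hp_sub: assumes Q: "is_ideal Q" shows "hp G Q \<subseteq> Q"
proof
  fix b assume "b \<in> hp G Q"
  then have "sum (hcomp G b) (supp G b) \<in> Q" by (intro ideal_sum[OF Q]) (simp add: hp_mem)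
  then show "b \<in> Q" using hc_sum_supp[of b] by simp
qed

lemma hp_hom: assumes Q: "is_ideal Q" and "a \<in> G d" "a \<in> Q" shows "a \<in> hp G Q"
  unfolding hp_mem using hc_hom[OF assms(2)] assms(3) ideal_0[OF Q] by simp

lemma hp_homog: assumes Q: "is_ideal Q" shows "homogeneous_ideal G (hp G Q)"
  unfolding homogeneous_ideal_def
proof (intro conjI ballI allI impI)
  show "is_ideal (hp G Q)" by (rule hp_ideal[OF Q])
  fix b f i assume b: "b \<in> hp G Q" and f: "graded_decomp G b f"
  have "f = hcomp G b" using hc_unique[OF f] by simp
  then show "f i \<in> hp G Q"
    using hc_hom[OF hc_in[of b i]] b ideal_0[OF Q] unfolding hp_mem by simp
qed

lemma trunc_comp:
  assumes T: "finite T"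
  shows "hcomp G (\<Sum>i\<in>T. hcomp G a i) k = (if k \<in> T then hcomp G a k else 0)"
proof -
  have "hcomp G (\<Sum>i\<in>T. hcomp G a i) k = (\<Sum>i\<in>T. if i = k then hcomp G a i else 0)"
    by (rule hc_hom_sum[OF T, where dg="\<lambda>i. i"]) (rule hc_in)
  also have "\<dots> = (if k \<in> T then hcomp G a k else 0)" using T by (simp add: sum.delta)
  finally show ?thesis .
qed

lemma top_comp:
  fixes A B :: "int set" and h :: "int \<Rightarrow> int \<Rightarrow> 'a"
  assumes A: "finite A" "A \<noteq> {}" and B: "finite B" "B \<noteq> {}"
  defines "m \<equiv> Max A" and "n \<equiv> Max B"
  shows "(\<Sum>i\<in>A. \<Sum>j\<in>B. if i + j = m + n then h i j else 0) = h m n"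
proof -
  have mA: "m \<in> A" "\<And>i. i \<in> A \<Longrightarrow> i \<le> m" unfolding m_def using A by auto
  have nB: "n \<in> B" "\<And>j. j \<in> B \<Longrightarrow> j \<le> n" unfolding n_def using B by auto
  have "(\<Sum>i\<in>A. \<Sum>j\<in>B. if i + j = m + n then h i j else 0) = (\<Sum>i\<in>A. if i = m then h m n else 0)"
  proof (rule sum.cong[OF refl])
    fix i assume i: "i \<in> A"
    show "(\<Sum>j\<in>B. if i + j = m + n then h i j else 0) = (if i = m then h m n else 0)"
    proof (cases "i = m")
      case True
      have "(\<Sum>j\<in>B. if i + j = m + n then h i j else 0) = (\<Sum>j\<in>B. if j = n then h i j else 0)"
        using True by (intro sum.cong) auto
      also have "\<dots> = h i n" using B(1) nB(1) by (simp add: sum.delta)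
      finally show ?thesis using True by simp
    next
      case False
      then have "i < m" using mA(2)[OF i] by simp
      then have "\<And>j. j \<in> B \<Longrightarrow> i + j \<noteq> m + n" using nB(2) by fastforce
      then show ?thesis using False by (simp add: sum.neutral)
    qed
  qed
  also have "\<dots> = h m n" using A(1) mA(1) by (simp add: sum.delta)
  finally show ?thesis .
qed

lemma hp_prime: assumes Q: "is_prime_ideal Q" shows "is_prime_ideal (hp G Q)"
  unfolding is_prime_ideal_def
proof (intro conjI allI impI)
  have Qid: "is_ideal Q" by (rule prime_ideal[OF Q])
  show hpi: "is_ideal (hp G Q)" by (rule hp_ideal[OF Qid])
  show "hp G Q \<noteq> UNIV" using hp_sub[OF Qid] prime_one[OF Q] by blast
  fix a b assume ab: "a * b \<in> hp G Q"
  show "a \<in> hp G Q \<or> b \<in> hp G Q"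
  proof (rule ccontr)
    assume nab: "\<not> (a \<in> hp G Q \<or> b \<in> hp G Q)"
    define Ta where "Ta = {i. hcomp G a i \<notin> Q}"
    define Tb where "Tb = {i. hcomp G b i \<notin> Q}"
    have TaS: "Ta \<subseteq> supp G a" unfolding Ta_def supp_def using ideal_0[OF Qid] by auto
    have TbS: "Tb \<subseteq> supp G b" unfolding Tb_def supp_def using ideal_0[OF Qid] by auto
    have Taf: "finite Ta" using finite_subset[OF TaS supp_fin] .
    have Tbf: "finite Tb" using finite_subset[OF TbS supp_fin] .
    have Tane: "Ta \<noteq> {}" using nab unfolding Ta_def hp_mem by auto
    have Tbne: "Tb \<noteq> {}" using nab unfolding Tb_def hp_mem by auto
    define a' where "a' = (\<Sum>i\<in>Ta. hcomp G a i)"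
    define b' where "b' = (\<Sum>i\<in>Tb. hcomp G b i)"
    have ca': "hcomp G a' k = (if k \<in> Ta then hcomp G a k else 0)" for k
      unfolding a'_def by (rule trunc_comp[OF Taf])
    have cb': "hcomp G b' k = (if k \<in> Tb then hcomp G b k else 0)" for k
      unfolding b'_def by (rule trunc_comp[OF Tbf])
    have da: "a - a' \<in> hp G Q" unfolding hp_mem hc_diff ca' using ideal_0[OF Qid] by (auto simp: Ta_def)
    have db: "b - b' \<in> hp G Q" unfolding hp_mem hc_diff cb' using ideal_0[OF Qid] by (auto simp: Tb_def)
    have e: "a' * b' = a * b - (a - a') * b - a' * (b - b')" by (simp add: algebra_simps)
    have "(a - a') * b \<in> hp G Q" using ideal_mult2[OF hpi da] .
    moreover have "a' * (b - b') \<in> hp G Q" using ideal_mult[OF hpi db] .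
    ultimately have "a' * b' \<in> hp G Q" unfolding e using ab ideal_diff[OF hpi] by simp
    then have inQ: "hcomp G (a' * b') (Max Ta + Max Tb) \<in> Q" unfolding hp_mem by blast
    have sa': "supp G a' \<subseteq> Ta" unfolding supp_def ca' by auto
    have sb': "supp G b' \<subseteq> Tb" unfolding supp_def cb' by auto
    have "hcomp G (a' * b') (Max Ta + Max Tb) =
       (\<Sum>i\<in>Ta. \<Sum>j\<in>Tb. if i + j = Max Ta + Max Tb then hcomp G a' i * hcomp G b' j else 0)"
      by (rule hc_mult_gen[OF Taf sa' Tbf sb'])
    also have "\<dots> = hcomp G a' (Max Ta) * hcomp G b' (Max Tb)"
      by (rule top_comp[OF Taf Tane Tbf Tbne])
    also have "\<dots> = hcomp G a (Max Ta) * hcomp G b (Max Tb)"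
      unfolding ca' cb' using Taf Tane Tbf Tbne by simp
    finally have "hcomp G a (Max Ta) * hcomp G b (Max Tb) \<in> Q" using inQ by simp
    moreover have "hcomp G a (Max Ta) \<notin> Q" using Max_in[OF Taf Tane] unfolding Ta_def by blast
    moreover have "hcomp G b (Max Tb) \<notin> Q" using Max_in[OF Tbf Tbne] unfolding Tb_def by blast
    ultimately show False using prime_mult[OF Q] by blast
  qed
qed

lemma deg_lemma:
  assumes gen: "subring_gen (G 0 \<union> x ` I) = UNIV"
    and xhom: "\<And>i. i \<in> I \<Longrightarrow> x i \<in> G (d i)"
    and P: "is_prime_ideal P" and one0: "1 \<in> G 0"
    and g: "g = Gcd (d ` {i\<in>I. x i \<notin> P})"
  shows "\<not> g dvd k \<Longrightarrow> hcomp G b k \<in> P"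
proof -
  have Pid: "is_ideal P" by (rule prime_ideal[OF P])
  have "b \<in> subring_gen (G 0 \<union> x ` I)" using gen by simp
  then show "\<not> g dvd k \<Longrightarrow> hcomp G b k \<in> P"
  proof (induction b arbitrary: k rule: subring_gen.induct)
    case (gen a)
    then show ?case
    proof (cases "a \<in> G 0")
      case True
      then show ?thesis using hc_hom[OF True, of k] gen(2) ideal_0[OF Pid] by auto
    next
      case False
      then obtain i where i: "i \<in> I" "a = x i" using gen(1) by blast
      show ?thesis
      proof (cases "k = d i")
        case True
        have "i \<notin> {i\<in>I. x i \<notin> P}"
        proof
          assume "i \<in> {i\<in>I. x i \<notin> P}"
          then have "g dvd d i" unfolding g by (intro Gcd_dvd) blast
          then show False using gen(2) True by simp
        qed
        then have "x i \<in> P" using i(1) by blast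
        then show ?thesis using hc_hom[OF xhom[OF i(1)], of k] i(2) ideal_0[OF Pid] by simp
      next
        case False
        then show ?thesis using hc_hom[OF xhom[OF i(1)], of k] i(2) ideal_0[OF Pid] by simp
      qed
    qed
  next
    case zero
    then show ?case using hc_zero ideal_0[OF Pid] by simp
  next
    case one
    then show ?case using hc_hom[OF one0, of k] ideal_0[OF Pid] by auto
  next
    case (add a b)
    then show ?case unfolding hc_add using ideal_add[OF Pid] by blast
  next
    case (neg a)
    then show ?case unfolding hc_neg using ideal_neg[OF Pid] by blast
  next
    case (mult a b)
    show ?case unfolding hc_mult
    proof (intro ideal_sum[OF Pid])
      fix i j
      show "(if i + j = k then hcomp G a i * hcomp G b j else 0) \<in> P"
      proof (cases "i + j = k")
        case True
        have "\<not> g dvd i \<or> \<not> g dvd j"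
        proof (rule ccontr)
          assume "\<not> (\<not> g dvd i \<or> \<not> g dvd j)"
          then have "g dvd i + j" by simp
          then show False using True mult.prems by simp
        qed
        then show ?thesis using True mult.IH ideal_mult[OF Pid] ideal_mult2[OF Pid] by auto
      next
        case False
        then show ?thesis using ideal_0[OF Pid] by simp
      qed
    qed
  qed
qed

end


lemma zero_prime: "is_prime_ideal {0::'a::idom}"
proof -
  have "(1::'a) \<notin> {0}" by simp
  then have "{0::'a} \<noteq> UNIV" by blast
  then show ?thesis unfolding is_prime_ideal_def using ideal_zero by auto
qed

lemma h1_prime: "height_one_prime P \<Longrightarrow> is_prime_ideal P"
  unfolding height_one_prime_def by blast

context graded
begin

lemma exists_h1:
  assumes noeth: "noetherian_ring TYPE('a)"
    and x0: "x0 \<in> G d0" "x0 \<noteq> 0" "\<not> x0 dvd 1"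
  shows "\<exists>P. homogeneous_ideal G P \<and> height_one_prime P \<and> x0 \<in> P"
proof -
  obtain M where M: "is_prime_ideal M" "x0 \<in> M" using exists_prime[OF noeth x0(3)] by blast
  obtain P where Pf: "is_prime_ideal P" "x0 \<in> P" "P \<subseteq> M"
    and minP: "\<forall>Q. is_prime_ideal Q \<and> x0 \<in> Q \<and> Q \<subseteq> P \<longrightarrow> Q = P"
    using exists_min_prime[OF M] by blast
  have Pid: "is_ideal P" by (rule prime_ideal[OF Pf(1)])
  have "hp G P = P"
  proof -
    have "is_prime_ideal (hp G P)" by (rule hp_prime[OF Pf(1)])
    moreover have "x0 \<in> hp G P" by (rule hp_hom[OF Pid x0(1) Pf(2)])
    moreover have "hp G P \<subseteq> P" by (rule hp_sub[OF Pid])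
    ultimately show ?thesis using minP by blast
  qed
  then have hom: "homogeneous_ideal G P" using hp_homog[OF Pid] by simp
  interpret pit_ctx P x0
    by (unfold_locales) (use noeth Pf minP in blast)+
  have "height_one_prime P"
    unfolding height_one_prime_def
  proof (intro conjI)
    show "is_prime_ideal P" by (rule Pf(1))
    show "height_ge P 1"
      unfolding height_ge_def
    proof (intro exI[of _ "\<lambda>i::nat. if i = 0 then {0} else P"] conjI allI impI)
      show "(if (1::nat) = 0 then {0} else P) = P" by simp
      fix i :: nat
      show "i \<le> 1 \<Longrightarrow> is_prime_ideal (if i = 0 then {0} else P)" by (simp add: zero_prime Pf(1))
      assume "i < 1"
      then have i0: "i = 0" by simp
      have "{0} \<subset> P" using ideal_0[OF Pid] Pf(2) x0(2) by blast
      then show "(if i = 0 then {0} else P) \<subset> (if Suc i = 0 then {0} else P)" using i0 by simp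
    qed
    show "\<not> height_ge P 2"
    proof
      assume "height_ge P 2"
      then obtain Q where Q: "Q 2 = P" "\<forall>i\<le>2. is_prime_ideal (Q i)" "\<forall>i<2. Q i \<subset> Q (Suc i)"
        unfolding height_ge_def by blast
      have Q1: "is_prime_ideal (Q 1)" using Q(2) by simp
      have "Q 1 \<subset> Q 2" using Q(3) by (metis numeral_2_eq_2 One_nat_def lessI)
      then have "Q 1 \<subset> P" using Q(1) by simp
      then have "Q 1 = {0}" using pit[OF Q1] by blast
      moreover have "Q 0 \<subset> Q 1" using Q(3) by simp
      ultimately have lt: "Q 0 \<subset> {0}" by simp
      have "0 \<in> Q 0" using Q(2) prime_ideal ideal_0 by auto
      then have "{0} \<subseteq> Q 0" by simp
      moreover have "Q 0 \<subseteq> {0}" using lt by (rule psubset_imp_subset)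
      ultimately have "Q 0 = {0}" by (rule equalityI[rotated])
      then show False using lt by simp
    qed
  qed
  then show ?thesis using hom Pf(2) by blast
qed

end

theorem lemma3p13:
  fixes G :: "int \<Rightarrow> 'a::idom set"
    and x :: "nat \<Rightarrow> 'a" and d :: "nat \<Rightarrow> int" and n :: nat
    and ee :: "nat \<Rightarrow> int" and U Uc :: "nat set" and E :: "nat set"
  assumes grad: "graded_ring G"
    and noeth: "noetherian_ring TYPE('a)"
    and eB: "e_deg G = 1"
    and n2: "n \<ge> 2"
    and gen: "subring_gen (G 0 \<union> x ` {1..n}) = UNIV"
    and xnz: "\<forall>i\<in>{1..n}. x i \<noteq> 0"
    and dnz: "\<forall>i\<in>{1..n}. d i \<noteq> 0"
    and xhom: "\<forall>i\<in>{1..n}. x i \<in> G (d i)"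
    and ee_def: "\<forall>i\<in>{1..n}. ee i = Gcd (d ` ({1..n} - {i}))"
    and U_def: "U = {i\<in>{1..n}. x i dvd 1}"
    and Uc_def: "Uc = {1..n} - U"
    and E_def: "E = prime_factors_int (\<Prod>i\<in>Uc. ee i)"
  shows "E \<subseteq> Pi_set G \<and>
    (U \<noteq> {} \<longrightarrow> Pi_set G \<subseteq> prime_factors_int (Gcd (d ` U))) \<and>
    ((\<not> (\<exists>P. height_one_prime P \<and> (\<Union>i\<in>- {0}. G i) \<subseteq> P))
           \<longrightarrow> Pi_set G \<subseteq> prime_factors_int (\<Prod>i\<in>{1..n}. d i)) \<and>
    ((\<forall>i\<in>{1..n}. \<forall>j\<in>{1..n}. i \<noteq> j \<longrightarrow>
            \<not> (\<exists>P. height_one_prime P \<and> x i \<in> P \<and> x j \<in> P))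
           \<longrightarrow> Pi_set G = E)"
proof -
  interpret graded G by (unfold_locales) (rule grad)
  have n1: "1 \<in> {1..n}" using n2 by simp
  have one0: "1 \<in> G 0" using one_G0[of "x 1" "d 1"] xhom xnz n1 by blast
  define SP where "SP P = {i\<in>{1..n}. x i \<notin> P}" for P :: "'a set"
  have degs: "Gcd (d ` SP P) dvd k" if P: "is_prime_ideal P" and k: "\<not> G k \<subseteq> P" for P k
  proof (rule ccontr)
    assume nd: "\<not> Gcd (d ` SP P) dvd k"
    obtain y where y: "y \<in> G k" "y \<notin> P" using k by blast
    have "hcomp G y k \<in> P"
      by (rule deg_lemma[OF gen _ P one0 _ nd]) (use xhom SP_def in auto)
    then show False using hc_hom[OF y(1), of k] y(2) by simp
  qed
  have eq_dvd: "e_quot G P dvd d j" if P: "is_prime_ideal P" and j: "j \<in> SP P" for P j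
  proof -
    have "\<not> G (d j) \<subseteq> P" using j xhom unfolding SP_def by blast
    then show ?thesis unfolding e_quot_def by (intro Gcd_dvd) simp
  qed
  have eq_dvd_g: "e_quot G P dvd Gcd (d ` SP P)" if P: "is_prime_ideal P" for P
    by (rule Gcd_greatest) (use eq_dvd[OF P] in blast)
  have g_dvd_eq: "Gcd (d ` SP P) dvd e_quot G P" if P: "is_prime_ideal P" for P
    unfolding e_quot_def by (rule Gcd_greatest) (use degs[OF P] in blast)
  have finUc: "finite Uc" unfolding Uc_def by simp
  have partA: "E \<subseteq> Pi_set G"
  proof
    fix p assume "p \<in> E"
    then have p: "prime p" "int p dvd (\<Prod>i\<in>Uc. ee i)" unfolding E_def prime_factors_int_def by auto
    have "prime (int p)" using p(1) by simp
    then obtain i where i: "i \<in> Uc" "int p dvd ee i" using prime_dvd_prod_iff[OF finUc] p(2) by blast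
    have i1: "i \<in> {1..n}" and iU: "\<not> x i dvd 1" using i(1) unfolding Uc_def U_def by auto
    obtain P where P: "homogeneous_ideal G P" "height_one_prime P" "x i \<in> P"
      using exists_h1[OF noeth _ _ iU] xhom xnz i1 by blast
    have Pp: "is_prime_ideal P" using h1_prime[OF P(2)] .
    have "SP P \<subseteq> {1..n} - {i}" unfolding SP_def using P(3) by blast
    then have "Gcd (d ` ({1..n} - {i})) dvd Gcd (d ` SP P)"
      by (intro Gcd_greatest) (auto intro: Gcd_dvd)
    then have "int p dvd Gcd (d ` SP P)" using i(2) ee_def i1 dvd_trans by metis
    then have "int p dvd e_quot G P" using g_dvd_eq[OF Pp] dvd_trans by blast
    then show "p \<in> Pi_set G" unfolding Pi_set_def using p(1) P(1,2) by blast
  qed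
  have PiE: "\<exists>P. homogeneous_ideal G P \<and> height_one_prime P \<and> is_prime_ideal P \<and> int p dvd e_quot G P"
    if "p \<in> Pi_set G" for p
    using that h1_prime unfolding Pi_set_def by blast
  have notin_unit: "x i \<notin> P" if "is_prime_ideal P" "x i dvd 1" for P i
  proof
    assume "x i \<in> P"
    then have "1 \<in> P" using that ideal_mult2[OF prime_ideal[OF that(1)], of "x i"] by (metis dvdE)
    then show False using prime_one[OF that(1)] by simp
  qed
  have partB: "U \<noteq> {} \<longrightarrow> Pi_set G \<subseteq> prime_factors_int (Gcd (d ` U))"
  proof (intro impI subsetI)
    fix p assume "p \<in> Pi_set G"
    then obtain P where P: "is_prime_ideal P" "int p dvd e_quot G P" and pp: "prime p"
      using PiE unfolding Pi_set_def by blast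
    have "int p dvd Gcd (d ` U)"
    proof (rule Gcd_greatest)
      fix b assume "b \<in> d ` U"
      then obtain i where i: "i \<in> U" "b = d i" by blast
      then have "i \<in> SP P" using notin_unit[OF P(1)] unfolding U_def SP_def by blast
      then show "int p dvd b" using eq_dvd[OF P(1)] P(2) i(2) dvd_trans by blast
    qed
    then show "p \<in> prime_factors_int (Gcd (d ` U))" unfolding prime_factors_int_def using pp by blast
  qed
  have partC: "(\<not> (\<exists>P. height_one_prime P \<and> (\<Union>i\<in>- {0}. G i) \<subseteq> P))
           \<longrightarrow> Pi_set G \<subseteq> prime_factors_int (\<Prod>i\<in>{1..n}. d i)"
  proof (intro impI subsetI)
    assume hyp: "\<not> (\<exists>P. height_one_prime P \<and> (\<Union>i\<in>- {0}. G i) \<subseteq> P)"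
    fix p assume "p \<in> Pi_set G"
    then obtain P where P: "height_one_prime P" "int p dvd e_quot G P" and pp: "prime p"
      unfolding Pi_set_def by blast
    have Pp: "is_prime_ideal P" using h1_prime[OF P(1)] .
    have "SP P \<noteq> {}"
    proof
      assume e: "SP P = {}"
      have "(\<Union>i\<in>- {0}. G i) \<subseteq> P"
      proof
        fix y assume "y \<in> (\<Union>i\<in>- {0}. G i)"
        then obtain k where k: "k \<noteq> 0" "y \<in> G k" by blast
        show "y \<in> P"
        proof (rule ccontr)
          assume "y \<notin> P"
          then have "Gcd (d ` SP P) dvd k" using degs[OF Pp, of k] k(2) by blast
          then show False using e k(1) by simp
        qed
      qed
      then show False using hyp P(1) by blast
    qed
    then obtain j where j: "j \<in> SP P" by blast
    have "int p dvd d j" using eq_dvd[OF Pp j] P(2) dvd_trans by blast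
    moreover have "d j dvd (\<Prod>i\<in>{1..n}. d i)" using j unfolding SP_def by (intro dvd_prodI) auto
    ultimately have "int p dvd (\<Prod>i\<in>{1..n}. d i)" by (rule dvd_trans)
    then show "p \<in> prime_factors_int (\<Prod>i\<in>{1..n}. d i)" unfolding prime_factors_int_def using pp by blast
  qed
  have partD: "(\<forall>i\<in>{1..n}. \<forall>j\<in>{1..n}. i \<noteq> j \<longrightarrow>
            \<not> (\<exists>P. height_one_prime P \<and> x i \<in> P \<and> x j \<in> P))
           \<longrightarrow> Pi_set G = E"
  proof (intro impI equalityI)
    assume hyp: "\<forall>i\<in>{1..n}. \<forall>j\<in>{1..n}. i \<noteq> j \<longrightarrow> \<not> (\<exists>P. height_one_prime P \<and> x i \<in> P \<and> x j \<in> P)"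
    show "E \<subseteq> Pi_set G" by (rule partA)
    show "Pi_set G \<subseteq> E"
    proof
      fix p assume "p \<in> Pi_set G"
      then obtain P where P: "height_one_prime P" "int p dvd e_quot G P" and pp: "prime p"
        unfolding Pi_set_def by blast
      have Pp: "is_prime_ideal P" using h1_prime[OF P(1)] .
      show "p \<in> E"
      proof (cases "\<exists>i\<in>{1..n}. x i \<in> P")
        case False
        then have SPall: "SP P = {1..n}" unfolding SP_def by blast
        have "Gcd (d ` {1..n}) dvd e_deg G"
          unfolding e_deg_def
        proof (rule Gcd_greatest)
          fix k assume "k \<in> {i. G i \<noteq> {0}}"
          then have "\<not> G k \<subseteq> {0}" using G0[of k] by blast
          moreover have "SP {0} = {1..n}" unfolding SP_def using xnz by auto
          ultimately show "Gcd (d ` {1..n}) dvd k" using degs[OF zero_prime, of k] by simp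
        qed
        then have "int p dvd 1" using eq_dvd_g[OF Pp] P(2) SPall eB dvd_trans by metis
        then show ?thesis using pp by (simp add: prime_nat_iff)
      next
        case True
        then obtain i where i: "i \<in> {1..n}" "x i \<in> P" by blast
        have SPi: "SP P = {1..n} - {i}"
        proof
          show "SP P \<subseteq> {1..n} - {i}" unfolding SP_def using i by blast
          show "{1..n} - {i} \<subseteq> SP P"
          proof
            fix j assume j: "j \<in> {1..n} - {i}"
            have "x j \<notin> P" using hyp i j P(1) by blast
            then show "j \<in> SP P" unfolding SP_def using j by blast
          qed
        qed
        have iUc: "i \<in> Uc" unfolding Uc_def U_def using i notin_unit[OF Pp] by blast
        have "int p dvd ee i" using eq_dvd_g[OF Pp] P(2) SPi ee_def i(1) dvd_trans by metis
        moreover have "ee i dvd (\<Prod>i\<in>Uc. ee i)" by (rule dvd_prodI[OF finUc iUc])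
        ultimately have "int p dvd (\<Prod>i\<in>Uc. ee i)" by (rule dvd_trans)
        then show ?thesis unfolding E_def prime_factors_int_def using pp by blast
      qed
    qed
  qed
  show ?thesis using partA partB partC partD by blast
qed



end
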